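(* Let $X$ be a compact Hausdorff space. The assignment sending a (semi-continuous) Banach bundle $(E,X,\pi)$ to the family $(E_n)_{n\ge1}$, $E_n=\{f\in E:\|f\|\le n\}$ with the subspace topology, is an equivalence of categories from Banach bundles over $X$ to bundles over $X$ of models of the continuous theory of Banach spaces; its inverse sends $(E_n)_{n\ge1}$ to $E=\bigcup_nE_n$ equipped with the final topology with respect to the inclusions $E_n\hookrightarrow E$.
   Context: A (semi-continuous) Banach bundle over $X$ is a surjection $\pi:E\to X$ of topological spaces such that: (1) each fibre $E_x$ is a Banach space over $\mathbb K\in\{\mathbb R,\mathbb C\}$; (2) $\pi$ is continuous and open; (3) scalar multiplication $\mathbb K\times E\to E$ and addition $E\times_XE\to E$ are continuous ($E\times_XE=\{(f,g):\pi f=\pi g\}$ with subspace topology); (4) the norm $E\to[0,\infty)$ is upper semicontinuous ($\{f:\|f\|<r\}$ open for all $r$); (5) for each $x\in X$ the sets $\coprod_{y\in U}B(0_y,r)$, $r>0$, $U$ open neighbourhood of $x$, form a neighbourhood basis of $0_x$. Morphisms: continuous maps over $X$ which are linear contractions on each fibre. Bundle of complete metric spaces bounded by $k$: surjection $\pi:E\to X$ with complete metric fibres (distances $\le k$), upper semicontinuous global distance on $E\times_XE$, continuous open $\pi$, and for every open $W$ and $f\in W$ an open $V\ni f$ and $\epsilon>0$ with $V\subseteq V_\epsilon\subseteq W$ ($V_\epsilon=\{g:\exists h\in V,\pi g=\pi h,d(g,h)<\epsilon\}$). A bundle of models of the continuous theory of Banach spaces over $X$ is a family $(E_n)_{n\ge1}$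 where $E_n$ is such a bundle (bound $2n$), together with Banach spaces $B_x$ ($x\in X$) such that the fibre $(E_n)_x$ is the closed ball of radius $n$ of $B_x$ with the norm metric, and such that the following global maps are continuous: the inclusions $E_n\to E_m$ ($n<m$), addition $E_n\times_XE_m\to E_{n+m}$, multiplication by each scalar $\lambda$ as a map $E_n\to E_{\lceil|\lambda|n\rceil}$, and the zero section $X\to E_1$. Morphisms: families of bundle morphisms $E_n\to E'_n$ which on each fibre are restrictions of a single linear contraction $B_x\to B'_x$. *)

theory Defs
  imports "HOL-Analysis.Analysis"
begin

text \<open>Scalars are complex numbers restricted to a scalar field K, which is either the
reals (embedded in the complex numbers) or all complex numbers.\<close>

record ('x, 'e) fibred =
  carr :: "'e set"
  proj :: "'e \<Rightarrow> 'x"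
  fadd :: "'e \<Rightarrow> 'e \<Rightarrow> 'e"
  fsmul :: "complex \<Rightarrow> 'e \<Rightarrow> 'e"
  fnorm :: "'e \<Rightarrow> real"
  fzero :: "'x \<Rightarrow> 'e"

definition fibre :: "('x, 'e) fibred \<Rightarrow> 'x \<Rightarrow> 'e set" where
  "fibre S x = {f \<in> carr S. proj S f = x}"

definition fsub :: "('x, 'e) fibred \<Rightarrow> 'e \<Rightarrow> 'e \<Rightarrow> 'e" where
  "fsub S f g = fadd S f (fsmul S (-1) g)"

definition fibprod :: "'e set \<Rightarrow> ('e \<Rightarrow> 'x) \<Rightarrow> ('e \<times> 'e) set" where
  "fibprod C p = {(f, g). f \<in> C \<and> g \<in> C \<and> p f = p g}"

definition banach_fibres :: "complex set \<Rightarrow> 'x topology \<Rightarrow> ('x, 'e) fibred \<Rightarrow> bool" where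
  "banach_fibres K X S \<longleftrightarrow>
     proj S ` carr S = topspace X \<and>
     (\<forall>x \<in> topspace X.
        fzero S x \<in> fibre S x \<and>
        (\<forall>f \<in> fibre S x. \<forall>g \<in> fibre S x. fadd S f g \<in> fibre S x) \<and>
        (\<forall>c \<in> K. \<forall>f \<in> fibre S x. fsmul S c f \<in> fibre S x) \<and>
        (\<forall>f \<in> fibre S x. \<forall>g \<in> fibre S x. \<forall>h \<in> fibre S x.
            fadd S (fadd S f g) h = fadd S f (fadd S g h)) \<and>
        (\<forall>f \<in> fibre S x. \<forall>g \<in> fibre S x. fadd S f g = fadd S g f) \<and>
        (\<forall>f \<in> fibre S x. fadd S f (fzero S x) = f) \<and>
        (\<forall>f \<in> fibre S x. fadd S f (fsmul S (-1) f) = fzero S x) \<and>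
        (\<forall>f \<in> fibre S x. fsmul S 1 f = f) \<and>
        (\<forall>c \<in> K. \<forall>d \<in> K. \<forall>f \<in> fibre S x. fsmul S c (fsmul S d f) = fsmul S (c * d) f) \<and>
        (\<forall>c \<in> K. \<forall>d \<in> K. \<forall>f \<in> fibre S x. fsmul S (c + d) f = fadd S (fsmul S c f) (fsmul S d f)) \<and>
        (\<forall>c \<in> K. \<forall>f \<in> fibre S x. \<forall>g \<in> fibre S x.
            fsmul S c (fadd S f g) = fadd S (fsmul S c f) (fsmul S c g)) \<and>
        (\<forall>f \<in> fibre S x. 0 \<le> fnorm S f) \<and>
        (\<forall>f \<in> fibre S x. fnorm S f = 0 \<longleftrightarrow> f = fzero S x) \<and>
        (\<forall>c \<in> K. \<forall>f \<in> fibre S x. fnorm S (fsmul S c f) = cmod c * fnorm S f) \<and>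
        (\<forall>f \<in> fibre S x. \<forall>g \<in> fibre S x. fnorm S (fadd S f g) \<le> fnorm S f + fnorm S g) \<and>
        (\<forall>u :: nat \<Rightarrow> 'e. (\<forall>n. u n \<in> fibre S x) \<and>
            (\<forall>e > 0. \<exists>N. \<forall>m \<ge> N. \<forall>n \<ge> N. fnorm S (fsub S (u m) (u n)) < e) \<longrightarrow>
            (\<exists>f \<in> fibre S x. (\<lambda>n. fnorm S (fsub S (u n) f)) \<longlonglongrightarrow> 0)))"

definition banach_bundle ::
  "complex set \<Rightarrow> 'x topology \<Rightarrow> ('x, 'e) fibred \<Rightarrow> 'e topology \<Rightarrow> bool" where
  "banach_bundle K X S TE \<longleftrightarrow>
     topspace TE = carr S \<and>
     banach_fibres K X S \<and>
     continuous_map TE X (proj S) \<and> open_map TE X (proj S) \<and>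
     continuous_map (prod_topology (top_of_set K) TE) TE (\<lambda>(c, f). fsmul S c f) \<and>
     continuous_map (subtopology (prod_topology TE TE) (fibprod (carr S) (proj S))) TE
        (\<lambda>(f, g). fadd S f g) \<and>
     (\<forall>r. openin TE {f \<in> carr S. fnorm S f < r}) \<and>
     (\<forall>x \<in> topspace X.
        (\<forall>U r. openin X U \<and> x \<in> U \<and> r > 0 \<longrightarrow>
           (\<exists>V. openin TE V \<and> fzero S x \<in> V \<and>
                V \<subseteq> {f \<in> carr S. proj S f \<in> U \<and> fnorm S f < r})) \<and>
        (\<forall>W. openin TE W \<and> fzero S x \<in> W \<longrightarrow>
           (\<exists>U r. openin X U \<and> x \<in> U \<and> r > 0 \<and>
                  {f \<in> carr S. proj S f \<in> U \<and> fnorm S f < r} \<subseteq> W)))"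

definition fibrewise_linear_contraction ::
  "complex set \<Rightarrow> ('x, 'e) fibred \<Rightarrow> ('x, 'e2) fibred \<Rightarrow> ('e \<Rightarrow> 'e2) \<Rightarrow> bool" where
  "fibrewise_linear_contraction K S S' \<phi> \<longleftrightarrow>
     (\<forall>f \<in> carr S. \<phi> f \<in> carr S' \<and> proj S' (\<phi> f) = proj S f) \<and>
     (\<forall>f \<in> carr S. \<forall>g \<in> carr S. proj S f = proj S g \<longrightarrow>
          \<phi> (fadd S f g) = fadd S' (\<phi> f) (\<phi> g)) \<and>
     (\<forall>c \<in> K. \<forall>f \<in> carr S. \<phi> (fsmul S c f) = fsmul S' c (\<phi> f)) \<and>
     (\<forall>f \<in> carr S. fnorm S' (\<phi> f) \<le> fnorm S f)"

definition bundle_morphism ::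
  "complex set \<Rightarrow> ('x, 'e) fibred \<Rightarrow> 'e topology \<Rightarrow> ('x, 'e2) fibred \<Rightarrow> 'e2 topology
     \<Rightarrow> ('e \<Rightarrow> 'e2) \<Rightarrow> bool" where
  "bundle_morphism K S TE S' TE' \<phi> \<longleftrightarrow>
     continuous_map TE TE' \<phi> \<and> fibrewise_linear_contraction K S S' \<phi>"

text \<open>Bundle of complete metric spaces bounded by k, total space topology T, projection p,
distance d (only meaningful on the fibre product).\<close>
definition cm_bundle ::
  "'x topology \<Rightarrow> 'e topology \<Rightarrow> ('e \<Rightarrow> 'x) \<Rightarrow> ('e \<Rightarrow> 'e \<Rightarrow> real) \<Rightarrow> real \<Rightarrow> bool" where
  "cm_bundle X T p d k \<longleftrightarrow>
     p ` topspace T = topspace X \<and>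
     (\<forall>x \<in> topspace X.
        let F = {f \<in> topspace T. p f = x} in
        (\<forall>f \<in> F. \<forall>g \<in> F. 0 \<le> d f g \<and> (d f g = 0 \<longleftrightarrow> f = g) \<and> d f g = d g f \<and> d f g \<le> k) \<and>
        (\<forall>f \<in> F. \<forall>g \<in> F. \<forall>h \<in> F. d f h \<le> d f g + d g h) \<and>
        (\<forall>u :: nat \<Rightarrow> 'e. (\<forall>n. u n \<in> F) \<and>
            (\<forall>e > 0. \<exists>N. \<forall>m \<ge> N. \<forall>n \<ge> N. d (u m) (u n) < e) \<longrightarrow>
            (\<exists>f \<in> F. (\<lambda>n. d (u n) f) \<longlonglongrightarrow> 0))) \<and>
     (\<forall>r. openin (subtopology (prod_topology T T) (fibprod (topspace T) p))
              {(f, g) \<in> fibprod (topspace T) p. d f g < r}) \<and>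
     continuous_map T X p \<and> open_map T X p \<and>
     (\<forall>W f. openin T W \<and> f \<in> W \<longrightarrow>
        (\<exists>V e. openin T V \<and> f \<in> V \<and> e > 0 \<and>
           (let Ve = {g \<in> topspace T. \<exists>h \<in> V. p g = p h \<and> d g h < e} in V \<subseteq> Ve \<and> Ve \<subseteq> W)))"

definition fball :: "('x, 'e) fibred \<Rightarrow> nat \<Rightarrow> 'e set" where
  "fball S n = {f \<in> carr S. fnorm S f \<le> real n}"

text \<open>The Banach spaces B_x are
the fibres of S; T n (n \<ge> 1) is the topology of the n-th sort E_n, whose fibres are the
closed balls of radius n. The inclusions E_n \<rightarrow> E_m are identities.\<close>
definition model_bundle ::
  "complex set \<Rightarrow> 'x topology \<Rightarrow> ('x, 'e) fibred \<Rightarrow> (nat \<Rightarrow> 'e topology) \<Rightarrow> bool" where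
  "model_bundle K X S T \<longleftrightarrow>
     banach_fibres K X S \<and>
     (\<forall>n \<ge> 1. topspace (T n) = fball S n \<and>
        cm_bundle X (T n) (proj S) (\<lambda>f g. fnorm S (fsub S f g)) (2 * real n)) \<and>
     (\<forall>n m. 1 \<le> n \<and> n < m \<longrightarrow> continuous_map (T n) (T m) id) \<and>
     (\<forall>n m. 1 \<le> n \<and> 1 \<le> m \<longrightarrow>
        continuous_map (subtopology (prod_topology (T n) (T m)) (fibprod (carr S) (proj S)))
          (T (n + m)) (\<lambda>(f, g). fadd S f g)) \<and>
     (\<forall>c \<in> K. c \<noteq> 0 \<longrightarrow> (\<forall>n \<ge> 1.
        continuous_map (T n) (T (nat \<lceil>cmod c * real n\<rceil>)) (fsmul S c))) \<and>
     continuous_map X (T 1) (fzero S)"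

definition model_morphism ::
  "complex set \<Rightarrow> ('x, 'e) fibred \<Rightarrow> (nat \<Rightarrow> 'e topology) \<Rightarrow> ('x, 'e2) fibred
     \<Rightarrow> (nat \<Rightarrow> 'e2 topology) \<Rightarrow> ('e \<Rightarrow> 'e2) \<Rightarrow> bool" where
  "model_morphism K S T S' T' \<phi> \<longleftrightarrow>
     fibrewise_linear_contraction K S S' \<phi> \<and>
     (\<forall>n \<ge> 1. continuous_map (T n) (T' n) \<phi>)"

definition to_models :: "('x, 'e) fibred \<Rightarrow> 'e topology \<Rightarrow> nat \<Rightarrow> 'e topology" where
  "to_models S TE n = subtopology TE (fball S n)"

definition from_models :: "('x, 'e) fibred \<Rightarrow> (nat \<Rightarrow> 'e topology) \<Rightarrow> 'e topology" where
  "from_models S T = topology (\<lambda>U. U \<subseteq> carr S \<and> (\<forall>n \<ge> 1. openin (T n) (U \<inter> topspace (T n))))"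

end

theory Submission
  imports Defs "HOL-Analysis.Analysis"
begin


lemma K_props:
  assumes "K = range complex_of_real \<or> K = UNIV"
  shows "complex_of_real r \<in> K" "-1 \<in> K" "1 \<in> K" "0 \<in> K"
    "c \<in> K \<Longrightarrow> d \<in> K \<Longrightarrow> c + d \<in> K"
    "c \<in> K \<Longrightarrow> d \<in> K \<Longrightarrow> c - d \<in> K"
    "c \<in> K \<Longrightarrow> - c \<in> K"
proof -
  have r: "complex_of_real r \<in> range complex_of_real" for r by blast
  show "complex_of_real r \<in> K" using assms r by auto
  show "-1 \<in> K" using assms r[of "-1"] by auto
  show "1 \<in> K" using assms r[of "1"] by auto
  show "0 \<in> K" using assms r[of "0"] by auto
  show "c \<in> K \<Longrightarrow> d \<in> K \<Longrightarrow> c + d \<in> K" using assms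
    by (auto simp flip: of_real_add)
  show "c \<in> K \<Longrightarrow> d \<in> K \<Longrightarrow> c - d \<in> K" using assms
    by (auto simp flip: of_real_diff)
  show "c \<in> K \<Longrightarrow> - c \<in> K" using assms
    by (auto simp flip: of_real_minus)
qed

locale bfib =
  fixes K :: "complex set" and F :: "'e set" and add :: "'e \<Rightarrow> 'e \<Rightarrow> 'e"
    and smul :: "complex \<Rightarrow> 'e \<Rightarrow> 'e" and nrm :: "'e \<Rightarrow> real" and z :: 'e
  assumes Kc: "K = range complex_of_real \<or> K = UNIV"
  and z: "z \<in> F"
  and addc: "\<And>f g. f \<in> F \<Longrightarrow> g \<in> F \<Longrightarrow> add f g \<in> F"
  and smulc: "\<And>c f. c \<in> K \<Longrightarrow> f \<in> F \<Longrightarrow> smul c f \<in> F"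
  and assoc: "\<And>f g h. f \<in> F \<Longrightarrow> g \<in> F \<Longrightarrow> h \<in> F \<Longrightarrow> add (add f g) h = add f (add g h)"
  and comm: "\<And>f g. f \<in> F \<Longrightarrow> g \<in> F \<Longrightarrow> add f g = add g f"
  and zr: "\<And>f. f \<in> F \<Longrightarrow> add f z = f"
  and negr: "\<And>f. f \<in> F \<Longrightarrow> add f (smul (-1) f) = z"
  and one: "\<And>f. f \<in> F \<Longrightarrow> smul 1 f = f"
  and sassoc: "\<And>c d f. c \<in> K \<Longrightarrow> d \<in> K \<Longrightarrow> f \<in> F \<Longrightarrow> smul c (smul d f) = smul (c * d) f"
  and distr1: "\<And>c d f. c \<in> K \<Longrightarrow> d \<in> K \<Longrightarrow> f \<in> F \<Longrightarrow> smul (c + d) f = add (smul c f) (smul d f)"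
  and distr2: "\<And>c f g. c \<in> K \<Longrightarrow> f \<in> F \<Longrightarrow> g \<in> F \<Longrightarrow> smul c (add f g) = add (smul c f) (smul c g)"
  and nn: "\<And>f. f \<in> F \<Longrightarrow> 0 \<le> nrm f"
  and n0: "\<And>f. f \<in> F \<Longrightarrow> nrm f = 0 \<longleftrightarrow> f = z"
  and nsmul: "\<And>c f. c \<in> K \<Longrightarrow> f \<in> F \<Longrightarrow> nrm (smul c f) = cmod c * nrm f"
  and tri: "\<And>f g. f \<in> F \<Longrightarrow> g \<in> F \<Longrightarrow> nrm (add f g) \<le> nrm f + nrm g"
begin

abbreviation "sub f g \<equiv> add f (smul (-1) g)"

lemma Km1: "-1 \<in> K" and K1: "1 \<in> K" and K0: "0 \<in> K"
  using K_props[OF Kc] by auto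

lemma subc: "f \<in> F \<Longrightarrow> g \<in> F \<Longrightarrow> sub f g \<in> F"
  using addc smulc Km1 by blast

lemma nz: "nrm z = 0" using n0 z by blast

lemma smul_z: "c \<in> K \<Longrightarrow> smul c z = z"
  using nsmul[of c z] nz n0 smulc z by auto

lemma sub_z: "f \<in> F \<Longrightarrow> sub f z = f"
  using smul_z[OF Km1] zr by simp

lemma zl: "f \<in> F \<Longrightarrow> add z f = f"
  using comm zr z by metis

lemma nneg: "f \<in> F \<Longrightarrow> nrm (smul (-1) f) = nrm f"
  using nsmul[OF Km1] by simp

lemma smul_m1_m1: "f \<in> F \<Longrightarrow> smul (-1) (smul (-1) f) = f"
  using sassoc[OF Km1 Km1] one by simp

lemma sub_swap: assumes "f \<in> F" "g \<in> F" shows "sub f g = smul (-1) (sub g f)"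
proof -
  have "smul (-1) (sub g f) = add (smul (-1) g) (smul (-1) (smul (-1) f))"
    using distr2 Km1 smulc assms by simp
  also have "\<dots> = add (smul (-1) g) f" using smul_m1_m1 assms by simp
  also have "\<dots> = sub f g" using comm smulc Km1 assms by simp
  finally show ?thesis by simp
qed

lemma nsub_sym: "f \<in> F \<Longrightarrow> g \<in> F \<Longrightarrow> nrm (sub f g) = nrm (sub g f)"
  using sub_swap nneg subc by metis

lemma sub_self: "f \<in> F \<Longrightarrow> sub f f = z" using negr .

lemma sub_eq0: assumes "f \<in> F" "g \<in> F" "sub f g = z" shows "f = g"
proof -
  have "g = add g (sub f g)" using assms zr by simp
  also have "\<dots> = add (add g f) (smul (-1) g)" using assoc assms smulc Km1 by simp
  also have "\<dots> = add f (add g (smul (-1) g))" using assoc comm assms smulc Km1 by metis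
  also have "\<dots> = f" using negr zr assms by simp
  finally show ?thesis by simp
qed

lemma nsub0: "f \<in> F \<Longrightarrow> g \<in> F \<Longrightarrow> nrm (sub f g) = 0 \<longleftrightarrow> f = g"
  using n0 subc sub_eq0 sub_self by metis

lemma sub_tri_eq: assumes "f \<in> F" "g \<in> F" "h \<in> F"
  shows "sub f h = add (sub f g) (sub g h)"
proof -
  let ?g = "smul (-1) g" and ?h = "smul (-1) h"
  have c: "?g \<in> F" "?h \<in> F" using assms smulc Km1 by auto
  have "add (sub f g) (sub g h) = add f (add ?g (add g ?h))"
    using assoc assms c addc by simp
  also have "\<dots> = add f (add (add ?g g) ?h)" using assoc assms c by simp
  also have "\<dots> = add f (add z ?h)" using comm negr assms c by metis
  also have "\<dots> = sub f h" using zl c by simp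
  finally show ?thesis by simp
qed

lemma nsub_tri: "f \<in> F \<Longrightarrow> g \<in> F \<Longrightarrow> h \<in> F \<Longrightarrow> nrm (sub f h) \<le> nrm (sub f g) + nrm (sub g h)"
  using sub_tri_eq tri subc by metis

lemma nsub_le: "f \<in> F \<Longrightarrow> g \<in> F \<Longrightarrow> nrm (sub f g) \<le> nrm f + nrm g"
  using tri nneg smulc Km1 by metis

lemma add_sub_cancel: assumes "h \<in> F" "g \<in> F" shows "add h (sub g h) = g"
proof -
  have "add h (sub g h) = add g (add h (smul (-1) h))"
    using assoc comm assms smulc Km1 by metis
  thus ?thesis using negr zr assms by simp
qed

lemma nrm_le_sub: assumes "f \<in> F" "g \<in> F" shows "nrm f \<le> nrm g + nrm (sub f g)"
  using tri[of g "sub f g"] add_sub_cancel[of g f] assms subc by simp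

lemma smul_sub: assumes "c \<in> K" "d \<in> K" "g \<in> F"
  shows "sub (smul c g) (smul d g) = smul (c - d) g"
proof -
  have "smul (-1) (smul d g) = smul (- d) g" using sassoc Km1 assms by simp
  moreover have "smul (c - d) g = add (smul c g) (smul (-d) g)"
    using distr1[of c "-d" g] assms K_props[OF Kc] by simp
  ultimately show ?thesis by simp
qed

lemma smul0: "f \<in> F \<Longrightarrow> smul 0 f = z"
  using nsmul[OF K0] n0 smulc K0 by auto

end


lemma fibre_iff: "f \<in> fibre S x \<longleftrightarrow> f \<in> carr S \<and> proj S f = x"
  by (simp add: fibre_def)

lemma bf_fib:
  assumes "banach_fibres K X S" "K = range complex_of_real \<or> K = UNIV" "x \<in> topspace X"
  shows "bfib K (fibre S x) (fadd S) (fsmul S) (fnorm S) (fzero S x)"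
proof -
  note h = assms(1)[unfolded banach_fibres_def, THEN conjunct2, rule_format, OF assms(3)]
  show ?thesis
    apply (insert assms(2) h, unfold_locales)
    apply (elim conjE; simp; fail)+
    done
qed

lemma bf_fibf:
  assumes "banach_fibres K X S" "K = range complex_of_real \<or> K = UNIV" "f \<in> carr S"
  shows "bfib K (fibre S (proj S f)) (fadd S) (fsmul S) (fnorm S) (fzero S (proj S f))"
proof -
  have "proj S ` carr S = topspace X" using assms(1) unfolding banach_fibres_def by (rule conjunct1)
  then have "proj S f \<in> topspace X" using assms(3) by blast
  then show ?thesis using bf_fib[OF assms(1,2)] by blast
qed

lemma bf_proj: "banach_fibres K X S \<Longrightarrow> proj S ` carr S = topspace X"
  unfolding banach_fibres_def by (rule conjunct1)

lemma fsub_eq: "fsub S f g = fadd S f (fsmul S (-1) g)" by (simp add: fsub_def)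

lemma istop_from_models:
  fixes T :: "nat \<Rightarrow> 'e topology"
  shows "istopology (\<lambda>U. U \<subseteq> carr S \<and> (\<forall>n\<ge>1. openin (T n) (U \<inter> topspace (T n))))"
proof -
  have 1: "A \<inter> B \<subseteq> carr S \<and> (\<forall>n\<ge>1. openin (T n) (A \<inter> B \<inter> topspace (T n)))"
    if A: "A \<subseteq> carr S \<and> (\<forall>n\<ge>1. openin (T n) (A \<inter> topspace (T n)))"
    and B: "B \<subseteq> carr S \<and> (\<forall>n\<ge>1. openin (T n) (B \<inter> topspace (T n)))" for A B
  proof (intro conjI allI impI)
    fix n :: nat assume n: "n \<ge> 1"
    have "A \<inter> B \<inter> topspace (T n) = (A \<inter> topspace (T n)) \<inter> (B \<inter> topspace (T n))" by blast
    then show "openin (T n) (A \<inter> B \<inter> topspace (T n))" using A B n by (simp add: openin_Int)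
  qed (use A in blast)
  have 2: "\<Union> KK \<subseteq> carr S \<and> (\<forall>n\<ge>1. openin (T n) (\<Union> KK \<inter> topspace (T n)))"
    if a: "\<forall>U\<in>KK. U \<subseteq> carr S \<and> (\<forall>n\<ge>1. openin (T n) (U \<inter> topspace (T n)))" for KK
  proof (intro conjI allI impI)
    show "\<Union> KK \<subseteq> carr S" using a by blast
    fix n :: nat assume "n \<ge> 1"
    have "\<Union> KK \<inter> topspace (T n) = \<Union> ((\<lambda>U. U \<inter> topspace (T n)) ` KK)" by blast
    moreover have "\<forall>V\<in>(\<lambda>U. U \<inter> topspace (T n)) ` KK. openin (T n) V"
      using a \<open>n \<ge> 1\<close> by blast
    ultimately show "openin (T n) (\<Union> KK \<inter> topspace (T n))"
      by (metis openin_Union)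
  qed
  show ?thesis unfolding istopology_def using 1 2 by blast
qed

lemma openin_from_models:
  "openin (from_models S T) U \<longleftrightarrow> U \<subseteq> carr S \<and> (\<forall>n\<ge>1. openin (T n) (U \<inter> topspace (T n)))"
  unfolding from_models_def topology_inverse'[OF istop_from_models] by (rule refl)

lemma topspace_from_models:
  assumes "\<And>n. n \<ge> 1 \<Longrightarrow> topspace (T n) \<subseteq> carr S"
  shows "topspace (from_models S T) = carr S"
proof
  show "topspace (from_models S T) \<subseteq> carr S"
    using openin_from_models[of S T "topspace (from_models S T)"] by simp
  have "openin (from_models S T) (carr S)"
    unfolding openin_from_models using assms by (simp add: Int_absorb1)
  then show "carr S \<subseteq> topspace (from_models S T)" by (rule openin_subset)
qed

lemma fball_sub: "fball S n \<subseteq> carr S" by (auto simp: fball_def)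

lemma fball_mono: "n \<le> m \<Longrightarrow> fball S n \<subseteq> fball S m" by (auto simp: fball_def)

lemma in_fball_large: "f \<in> carr S \<Longrightarrow> \<exists>n\<ge>1. f \<in> fball S n \<and> fnorm S f < real n"
proof -
  assume f: "f \<in> carr S"
  obtain n :: nat where "fnorm S f < real n" using reals_Archimedean2 by blast
  then show ?thesis using f
    by (intro exI[of _ "max n 1"]) (auto simp: fball_def)
qed

lemma topspace_to_models:
  "topspace TE = carr S \<Longrightarrow> topspace (to_models S TE n) = fball S n"
  by (auto simp: to_models_def fball_def)

lemma BB_final:
  assumes bb: "banach_bundle K X S TE"
  shows "openin TE U \<longleftrightarrow> U \<subseteq> carr S \<and> (\<forall>n\<ge>1. openin (subtopology TE (fball S n)) (U \<inter> fball S n))"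
proof
  have ts: "topspace TE = carr S" using bb by (simp add: banach_bundle_def)
  show "U \<subseteq> carr S \<and> (\<forall>n\<ge>1. openin (subtopology TE (fball S n)) (U \<inter> fball S n))"
    if o: "openin TE U"
    using openin_subset[OF o] ts openin_subtopology_Int[OF o] by auto
  show "openin TE U" if r: "U \<subseteq> carr S \<and> (\<forall>n\<ge>1. openin (subtopology TE (fball S n)) (U \<inter> fball S n))"
  proof (rule openin_subopen[THEN iffD2], rule ballI)
    fix f assume f: "f \<in> U"
    have fc: "f \<in> carr S" using r f by blast
    obtain n where n: "n \<ge> 1" "f \<in> fball S n" "fnorm S f < real n"
      using in_fball_large[OF fc] by blast
    have "openin (subtopology TE (fball S n)) (U \<inter> fball S n)" using r n(1) by blast
    then obtain W0 where W0: "openin TE W0" "U \<inter> fball S n = W0 \<inter> fball S n"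
      by (auto simp: openin_subtopology)
    let ?N = "{g \<in> carr S. fnorm S g < real n}"
    have N: "openin TE ?N" using bb by (simp add: banach_bundle_def)
    have "?N \<subseteq> fball S n" by (auto simp: fball_def)
    then have "W0 \<inter> ?N \<subseteq> U" using W0 by blast
    moreover have "f \<in> W0 \<inter> ?N" using W0 n f fc by blast
    ultimately show "\<exists>T. openin TE T \<and> f \<in> T \<and> T \<subseteq> U" using W0 N by blast
  qed
qed

lemma part3:
  assumes bb: "banach_bundle K X S TE"
  shows "from_models S (to_models S TE) = TE"
proof (rule topology_eq[THEN iffD2], intro allI)
  fix U
  have ts: "topspace TE = carr S" using bb by (simp add: banach_bundle_def)
  have "openin (from_models S (to_models S TE)) U \<longleftrightarrow>
     U \<subseteq> carr S \<and> (\<forall>n\<ge>1. openin (to_models S TE n) (U \<inter> fball S n))"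
    by (simp only: openin_from_models topspace_to_models[OF ts])
  also have "\<dots> \<longleftrightarrow> openin TE U"
    by (simp only: to_models_def BB_final[OF bb, of U])
  finally show "openin (from_models S (to_models S TE)) U = openin TE U" .
qed


lemma bbD:
  assumes "banach_bundle K X S TE"
  shows bbD_ts: "topspace TE = carr S" and bbD_bf: "banach_fibres K X S"
   and bbD_pc: "continuous_map TE X (proj S)" and bbD_po: "open_map TE X (proj S)"
   and bbD_sm: "continuous_map (prod_topology (top_of_set K) TE) TE (\<lambda>(c, f). fsmul S c f)"
   and bbD_ad: "continuous_map (subtopology (prod_topology TE TE) (fibprod (carr S) (proj S))) TE
        (\<lambda>(f, g). fadd S f g)"
   and bbD_no: "\<And>r. openin TE {f \<in> carr S. fnorm S f < r}"
   and bbD_z1: "\<And>x U r. x \<in> topspace X \<Longrightarrow> openin X U \<Longrightarrow> x \<in> U \<Longrightarrow> r > 0 \<Longrightarrow>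
           (\<exists>V. openin TE V \<and> fzero S x \<in> V \<and>
                V \<subseteq> {f \<in> carr S. proj S f \<in> U \<and> fnorm S f < r})"
   and bbD_z2: "\<And>x W. x \<in> topspace X \<Longrightarrow> openin TE W \<Longrightarrow> fzero S x \<in> W \<Longrightarrow>
           (\<exists>U r. openin X U \<and> x \<in> U \<and> r > 0 \<and>
                  {f \<in> carr S. proj S f \<in> U \<and> fnorm S f < r} \<subseteq> W)"
  using assms unfolding banach_bundle_def by blast+

context
  fixes K :: "complex set" and X :: "'x topology" and S :: "('x, 'e) fibred"
  assumes bf: "banach_fibres K X S" and Kc: "K = range complex_of_real \<or> K = UNIV"
begin

lemma fb: "f \<in> carr S \<Longrightarrow> bfib K (fibre S (proj S f)) (fadd S) (fsmul S) (fnorm S) (fzero S (proj S f))"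
  by (rule bf_fibf[OF bf Kc])

lemma fbx: "x \<in> topspace X \<Longrightarrow> bfib K (fibre S x) (fadd S) (fsmul S) (fnorm S) (fzero S x)"
  by (rule bf_fib[OF bf Kc])

lemma projc: "f \<in> carr S \<Longrightarrow> proj S f \<in> topspace X"
  using bf_proj[OF bf] by blast

lemma zero_in: "x \<in> topspace X \<Longrightarrow> fzero S x \<in> carr S \<and> proj S (fzero S x) = x"
  using bfib.z[OF fbx] by (simp add: fibre_iff)

lemma add_in: "f \<in> carr S \<Longrightarrow> g \<in> carr S \<Longrightarrow> proj S g = proj S f \<Longrightarrow>
   fadd S f g \<in> carr S \<and> proj S (fadd S f g) = proj S f"
  using bfib.addc[OF fb, of f f g] by (simp add: fibre_iff)

lemma smul_in: "c \<in> K \<Longrightarrow> f \<in> carr S \<Longrightarrow> fsmul S c f \<in> carr S \<and> proj S (fsmul S c f) = proj S f"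
  using bfib.smulc[OF fb, of f c f] by (simp add: fibre_iff)

lemma sub_in: "f \<in> carr S \<Longrightarrow> g \<in> carr S \<Longrightarrow> proj S g = proj S f \<Longrightarrow>
   fsub S f g \<in> carr S \<and> proj S (fsub S f g) = proj S f"
  using bfib.subc[OF fb, of f f g] by (simp add: fibre_iff fsub_def)

lemma nsmul: "c \<in> K \<Longrightarrow> f \<in> carr S \<Longrightarrow> fnorm S (fsmul S c f) = cmod c * fnorm S f"
  using bfib.nsmul[OF fb, of f c f] by (simp add: fibre_iff)

lemma nnn: "f \<in> carr S \<Longrightarrow> 0 \<le> fnorm S f"
  using bfib.nn[OF fb, of f f] by (simp add: fibre_iff)

lemma ntri: "f \<in> carr S \<Longrightarrow> g \<in> carr S \<Longrightarrow> proj S g = proj S f \<Longrightarrow>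
   fnorm S (fadd S f g) \<le> fnorm S f + fnorm S g"
  using bfib.tri[OF fb, of f f g] by (simp add: fibre_iff)

lemma nzero: "x \<in> topspace X \<Longrightarrow> fnorm S (fzero S x) = 0"
  using bfib.nz[OF fbx] .

lemma sub_zero: "f \<in> carr S \<Longrightarrow> fsub S f (fzero S (proj S f)) = f"
  using bfib.sub_z[OF fb, of f f] by (simp add: fibre_iff fsub_def)

lemma add_sub_cancel: "h \<in> carr S \<Longrightarrow> g \<in> carr S \<Longrightarrow> proj S g = proj S h \<Longrightarrow>
    fadd S h (fsub S g h) = g"
  using bfib.add_sub_cancel[OF fb, of h h g] by (simp add: fibre_iff fsub_def)

lemma nsub_sym: "f \<in> carr S \<Longrightarrow> g \<in> carr S \<Longrightarrow> proj S g = proj S f \<Longrightarrow>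
    fnorm S (fsub S f g) = fnorm S (fsub S g f)"
  using bfib.nsub_sym[OF fb, of f f g] by (simp add: fibre_iff fsub_def)

lemma nsub0: "f \<in> carr S \<Longrightarrow> g \<in> carr S \<Longrightarrow> proj S g = proj S f \<Longrightarrow>
    fnorm S (fsub S f g) = 0 \<longleftrightarrow> f = g"
  using bfib.nsub0[OF fb, of f f g] by (simp add: fibre_iff fsub_def)

lemma nsub_tri: "f \<in> carr S \<Longrightarrow> g \<in> carr S \<Longrightarrow> h \<in> carr S \<Longrightarrow> proj S g = proj S f \<Longrightarrow>
    proj S h = proj S f \<Longrightarrow> fnorm S (fsub S f h) \<le> fnorm S (fsub S f g) + fnorm S (fsub S g h)"
  using bfib.nsub_tri[OF fb, of f f g h] by (simp add: fibre_iff fsub_def)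

lemma nsub_le: "f \<in> carr S \<Longrightarrow> g \<in> carr S \<Longrightarrow> proj S g = proj S f \<Longrightarrow>
    fnorm S (fsub S f g) \<le> fnorm S f + fnorm S g"
  using bfib.nsub_le[OF fb, of f f g] by (simp add: fibre_iff fsub_def)

lemma nrm_le_sub: "f \<in> carr S \<Longrightarrow> g \<in> carr S \<Longrightarrow> proj S g = proj S f \<Longrightarrow>
    fnorm S f \<le> fnorm S g + fnorm S (fsub S f g)"
  using bfib.nrm_le_sub[OF fb, of f f g] by (simp add: fibre_iff fsub_def)

lemma smul_sub: "c \<in> K \<Longrightarrow> d \<in> K \<Longrightarrow> g \<in> carr S \<Longrightarrow>
    fsub S (fsmul S c g) (fsmul S d g) = fsmul S (c - d) g"
  using bfib.smul_sub[OF fb, of g c d g] by (simp add: fibre_iff fsub_def)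

lemma smul0: "f \<in> carr S \<Longrightarrow> fsmul S 0 f = fzero S (proj S f)"
  using bfib.smul0[OF fb, of f f] by (simp add: fibre_iff)

lemma smul1: "f \<in> carr S \<Longrightarrow> fsmul S 1 f = f"
  using bfib.one[OF fb, of f f] by (simp add: fibre_iff)

lemma nzero_iff: "f \<in> carr S \<Longrightarrow> fnorm S f = 0 \<longleftrightarrow> f = fzero S (proj S f)"
  using bfib.n0[OF fb, of f f] by (simp add: fibre_iff)

end


lemma fibre_complete:
  assumes bf: "banach_fibres K X S" and x: "x \<in> topspace X"
  shows "\<forall>u :: nat \<Rightarrow> 'e. (\<forall>n. u n \<in> fibre S x) \<and>
            (\<forall>e > 0. \<exists>N. \<forall>m \<ge> N. \<forall>n \<ge> N. fnorm S (fsub S (u m) (u n)) < e) \<longrightarrow>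
            (\<exists>f \<in> fibre S x. (\<lambda>n. fnorm S (fsub S (u n) f)) \<longlonglongrightarrow> 0)"
proof -
  note h = bf[unfolded banach_fibres_def, THEN conjunct2, rule_format, OF x]
  show ?thesis
    apply (insert h)
    apply (elim conjE)
    apply assumption
    done
qed

lemma add_zero_r: "banach_fibres K X S \<Longrightarrow> K = range complex_of_real \<or> K = UNIV \<Longrightarrow>
  f \<in> carr S \<Longrightarrow> fadd S f (fzero S (proj S f)) = f"
  using bfib.zr[OF fb, of K X S f f] by (simp add: fibre_iff)

context
  fixes K :: "complex set" and X :: "'x topology" and S :: "('x, 'e) fibred" and TE :: "'e topology"
  assumes bb: "banach_bundle K X S TE" and Kc: "K = range complex_of_real \<or> K = UNIV"
begin

lemmas bf = bbD_bf[OF bb]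
lemmas ts = bbD_ts[OF bb]

lemma tsZ: "topspace (subtopology (prod_topology TE TE) (fibprod (carr S) (proj S))) = fibprod (carr S) (proj S)"
  by (auto simp: fibprod_def ts)

lemma smul_cont_c: "f \<in> carr S \<Longrightarrow> continuous_map (top_of_set K) TE (\<lambda>c. fsmul S c f)"
proof -
  assume f: "f \<in> carr S"
  have "continuous_map (top_of_set K) (prod_topology (top_of_set K) TE) (\<lambda>c. (id c, f))"
    by (intro continuous_map_pairedI continuous_map_id) (simp add: f ts)
  from continuous_map_compose[OF this bbD_sm[OF bb]] show ?thesis by (simp add: o_def)
qed

lemma smul_cont_f: "c \<in> K \<Longrightarrow> continuous_map TE TE (fsmul S c)"
proof -
  assume c: "c \<in> K"
  have "continuous_map TE (prod_topology (top_of_set K) TE) (\<lambda>f. (c, id f))"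
    by (intro continuous_map_pairedI continuous_map_id) (simp add: c)
  from continuous_map_compose[OF this bbD_sm[OF bb]] show ?thesis by (simp add: o_def)
qed

lemma sub_cont: "continuous_map (subtopology (prod_topology TE TE) (fibprod (carr S) (proj S))) TE
   (\<lambda>(f, g). fsub S f g)"
proof -
  let ?Z = "subtopology (prod_topology TE TE) (fibprod (carr S) (proj S))"
  have c1: "continuous_map ?Z TE fst"
    by (rule continuous_map_from_subtopology[OF continuous_map_fst])
  have c2': "continuous_map ?Z (prod_topology (top_of_set K) TE) (\<lambda>p. (-1, snd p))"
    by (intro continuous_map_pairedI continuous_map_from_subtopology continuous_map_snd)
      (simp add: K_props(2)[OF Kc])
  have c2: "continuous_map ?Z TE (\<lambda>p. fsmul S (-1) (snd p))"
    using continuous_map_compose[OF c2' bbD_sm[OF bb]] by (simp add: o_def)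
  have h: "continuous_map ?Z ?Z (\<lambda>p. (fst p, fsmul S (-1) (snd p)))"
    unfolding continuous_map_in_subtopology
  proof
    show "continuous_map ?Z (prod_topology TE TE) (\<lambda>p. (fst p, fsmul S (- 1) (snd p)))"
      using c1 c2 by (intro continuous_map_pairedI)
    show "(\<lambda>p. (fst p, fsmul S (- 1) (snd p))) \<in> topspace ?Z \<rightarrow> fibprod (carr S) (proj S)"
      unfolding tsZ using smul_in[OF bf Kc K_props(2)[OF Kc]] by (auto simp: fibprod_def)
  qed
  have eq: "(\<lambda>(f, g). fsub S f g) = (\<lambda>(f, g). fadd S f g) \<circ> (\<lambda>p. (fst p, fsmul S (-1) (snd p)))"
    by (auto simp: fun_eq_iff fsub_def)
  show ?thesis unfolding eq by (rule continuous_map_compose[OF h bbD_ad[OF bb]])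
qed

lemma zero_cont: "continuous_map X TE (fzero S)"
  unfolding continuous_map
proof (intro conjI allI impI)
  show "fzero S ` topspace X \<subseteq> topspace TE" using zero_in[OF bf Kc] ts by auto
  fix W assume W: "openin TE W"
  show "openin X {x \<in> topspace X. fzero S x \<in> W}"
  proof (rule openin_subopen[THEN iffD2], rule ballI)
    fix x assume x: "x \<in> {x \<in> topspace X. fzero S x \<in> W}"
    then obtain U r where U: "openin X U" "x \<in> U" "r > 0"
      "{f \<in> carr S. proj S f \<in> U \<and> fnorm S f < r} \<subseteq> W"
      using bbD_z2[OF bb, of x W] W by blast
    have "U \<subseteq> {x \<in> topspace X. fzero S x \<in> W}"
    proof
      fix y assume y: "y \<in> U"
      then have yX: "y \<in> topspace X" using openin_subset[OF U(1)] by blast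
      then show "y \<in> {x \<in> topspace X. fzero S x \<in> W}"
        using zero_in[OF bf Kc yX] nzero[OF bf Kc yX] U y by auto
    qed
    then show "\<exists>T. openin X T \<and> x \<in> T \<and> T \<subseteq> {x \<in> topspace X. fzero S x \<in> W}"
      using U by blast
  qed
qed

lemma Tn_eq: "to_models S TE n = subtopology TE (fball S n)"
  by (simp add: to_models_def)

lemma ts_Tn: "topspace (to_models S TE n) = fball S n"
  by (rule topspace_to_models[OF ts])

lemma prod_Tn: "subtopology (prod_topology (to_models S TE n) (to_models S TE m)) A =
    subtopology (prod_topology TE TE) ((fball S n \<times> fball S m) \<inter> A)"
  unfolding Tn_eq subtopology_Times[symmetric] subtopology_subtopology ..

end


lemma cm_bundleI:
  assumes "p ` topspace T = topspace X"
  and "\<And>x f g. x \<in> topspace X \<Longrightarrow> f \<in> topspace T \<Longrightarrow> g \<in> topspace T \<Longrightarrow> p f = x \<Longrightarrow> p g = x \<Longrightarrow>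
        0 \<le> d f g \<and> (d f g = 0 \<longleftrightarrow> f = g) \<and> d f g = d g f \<and> d f g \<le> k"
  and "\<And>x f g h. x \<in> topspace X \<Longrightarrow> f \<in> topspace T \<Longrightarrow> g \<in> topspace T \<Longrightarrow> h \<in> topspace T \<Longrightarrow>
        p f = x \<Longrightarrow> p g = x \<Longrightarrow> p h = x \<Longrightarrow> d f h \<le> d f g + d g h"
  and "\<And>x u. x \<in> topspace X \<Longrightarrow> (\<forall>n. u n \<in> topspace T \<and> p (u n) = x) \<Longrightarrow>
        (\<forall>e>0. \<exists>N. \<forall>m\<ge>N. \<forall>n\<ge>N. d (u m) (u n) < e) \<Longrightarrow>
        \<exists>f. f \<in> topspace T \<and> p f = x \<and> (\<lambda>n. d (u n) f) \<longlonglongrightarrow> 0"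
  and "\<And>r. openin (subtopology (prod_topology T T) (fibprod (topspace T) p))
              {(f, g) \<in> fibprod (topspace T) p. d f g < r}"
  and "continuous_map T X p" and "open_map T X p"
  and "\<And>W f. openin T W \<Longrightarrow> f \<in> W \<Longrightarrow> \<exists>V e. openin T V \<and> f \<in> V \<and> e > 0 \<and>
         V \<subseteq> {g \<in> topspace T. \<exists>h \<in> V. p g = p h \<and> d g h < e} \<and>
         {g \<in> topspace T. \<exists>h \<in> V. p g = p h \<and> d g h < e} \<subseteq> W"
  shows "cm_bundle X T p d k"
  unfolding cm_bundle_def Let_def
proof (intro conjI ballI allI impI)
  show "p ` topspace T = topspace X" by (rule assms(1))
  fix x assume x: "x \<in> topspace X"
  {
    fix f g assume "f \<in> {f \<in> topspace T. p f = x}" "g \<in> {f \<in> topspace T. p f = x}"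
    then show "0 \<le> d f g" "d f g = 0 \<longleftrightarrow> f = g" "d f g = d g f" "d f g \<le> k"
      using assms(2)[OF x, of f g] by auto
  }
  {
    fix f g h assume "f \<in> {f \<in> topspace T. p f = x}" "g \<in> {f \<in> topspace T. p f = x}" "h \<in> {f \<in> topspace T. p f = x}"
    then show "d f h \<le> d f g + d g h" using assms(3)[OF x, of f g h] by auto
  }
  fix u :: "nat \<Rightarrow> 'b"
  assume u: "(\<forall>n. u n \<in> {f \<in> topspace T. p f = x}) \<and> (\<forall>e>0. \<exists>N. \<forall>m\<ge>N. \<forall>n\<ge>N. d (u m) (u n) < e)"
  then obtain f where "f \<in> topspace T" "p f = x" "(\<lambda>n. d (u n) f) \<longlonglongrightarrow> 0"
    using assms(4)[OF x, of u] by auto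
  then show "\<exists>f\<in>{f \<in> topspace T. p f = x}. (\<lambda>n. d (u n) f) \<longlonglongrightarrow> 0" by blast
next
  fix r show "openin (subtopology (prod_topology T T) (fibprod (topspace T) p))
              {(f, g) \<in> fibprod (topspace T) p. d f g < r}" by (rule assms(5))
next
  show "continuous_map T X p" by (rule assms(6))
next
  show "open_map T X p" by (rule assms(7))
next
  fix W f assume "openin T W \<and> f \<in> W"
  then show "\<exists>V e. openin T V \<and> f \<in> V \<and> 0 < e \<and>
           V \<subseteq> {g \<in> topspace T. \<exists>h\<in>V. p g = p h \<and> d g h < e} \<and>
           {g \<in> topspace T. \<exists>h\<in>V. p g = p h \<and> d g h < e} \<subseteq> W"
    using assms(8) by blast
qed

context
  fixes K :: "complex set" and X :: "'x topology" and S :: "('x, 'e) fibred" and TE :: "'e topology"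
  assumes bb: "banach_bundle K X S TE" and Kc: "K = range complex_of_real \<or> K = UNIV"
begin

lemmas bf1 = bbD_bf[OF bb]
lemmas ts1 = bbD_ts[OF bb]

lemma cm1:
  assumes n: "n \<ge> 1"
  shows "cm_bundle X (to_models S TE n) (proj S) (\<lambda>f g. fnorm S (fsub S f g)) (2 * real n)"
proof (rule cm_bundleI, unfold ts_Tn[OF bb Kc])
  show "proj S ` fball S n = topspace X"
  proof
    show "proj S ` fball S n \<subseteq> topspace X" using projc[OF bf1 Kc] by (auto simp: fball_def)
    show "topspace X \<subseteq> proj S ` fball S n"
    proof
      fix x assume x: "x \<in> topspace X"
      then have "fzero S x \<in> fball S n" using zero_in[OF bf1 Kc x] nzero[OF bf1 Kc x]
        by (auto simp: fball_def)
      then show "x \<in> proj S ` fball S n" using zero_in[OF bf1 Kc x] by (metis image_eqI)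
    qed
  qed
next
  fix x f g assume "f \<in> fball S n" "g \<in> fball S n" "proj S f = x" "proj S g = x"
  then have f: "f \<in> carr S" "fnorm S f \<le> n" and g: "g \<in> carr S" "fnorm S g \<le> n"
    and pg: "proj S g = proj S f" by (auto simp: fball_def)
  show "0 \<le> fnorm S (fsub S f g) \<and> (fnorm S (fsub S f g) = 0) = (f = g) \<and>
    fnorm S (fsub S f g) = fnorm S (fsub S g f) \<and> fnorm S (fsub S f g) \<le> 2 * real n"
  proof (intro conjI)
    show "0 \<le> fnorm S (fsub S f g)"
      using nnn[OF bf1 Kc] sub_in[OF bf1 Kc f(1) g(1) pg] by blast
    show "(fnorm S (fsub S f g) = 0) = (f = g)" by (rule nsub0[OF bf1 Kc f(1) g(1) pg])
    show "fnorm S (fsub S f g) = fnorm S (fsub S g f)" by (rule nsub_sym[OF bf1 Kc f(1) g(1) pg])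
    show "fnorm S (fsub S f g) \<le> 2 * real n"
      using nsub_le[OF bf1 Kc f(1) g(1) pg] f(2) g(2) by linarith
  qed
next
  fix x f g h assume "f \<in> fball S n" "g \<in> fball S n" "h \<in> fball S n"
    "proj S f = x" "proj S g = x" "proj S h = x"
  then show "fnorm S (fsub S f h) \<le> fnorm S (fsub S f g) + fnorm S (fsub S g h)"
    using nsub_tri[OF bf1 Kc, of f g h] by (auto simp: fball_def)
next
  fix x and u :: "nat \<Rightarrow> 'e" assume x: "x \<in> topspace X" and u: "\<forall>k. u k \<in> fball S n \<and> proj S (u k) = x"
    and cy: "\<forall>e>0. \<exists>N. \<forall>m\<ge>N. \<forall>k\<ge>N. fnorm S (fsub S (u m) (u k)) < e"
  have "\<forall>k. u k \<in> fibre S x" using u by (auto simp: fibre_def fball_def)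
  then obtain f where f: "f \<in> fibre S x" and lim: "(\<lambda>k. fnorm S (fsub S (u k) f)) \<longlonglongrightarrow> 0"
    using fibre_complete[OF bf1 x] cy by blast
  have fc: "f \<in> carr S" "proj S f = x" using f by (auto simp: fibre_def)
  have "fnorm S f \<le> real n + 0"
  proof (rule LIMSEQ_le_const)
    show "(\<lambda>k. real n + fnorm S (fsub S (u k) f)) \<longlonglongrightarrow> real n + 0"
      by (intro tendsto_add tendsto_const lim)
    show "\<exists>N. \<forall>k\<ge>N. fnorm S f \<le> real n + fnorm S (fsub S (u k) f)"
    proof (intro exI allI impI)
      fix k
      have uk: "u k \<in> carr S" "fnorm S (u k) \<le> n" "proj S (u k) = proj S f"
        using u fc by (auto simp: fball_def)
      have "fnorm S f \<le> fnorm S (u k) + fnorm S (fsub S f (u k))"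
        using nrm_le_sub[OF bf1 Kc fc(1) uk(1) uk(3)] .
      also have "fnorm S (fsub S f (u k)) = fnorm S (fsub S (u k) f)"
        using nsub_sym[OF bf1 Kc fc(1) uk(1) uk(3)] .
      finally show "fnorm S f \<le> real n + fnorm S (fsub S (u k) f)" using uk(2) by linarith
    qed
  qed
  then have "f \<in> fball S n" using fc by (auto simp: fball_def)
  then show "\<exists>f. f \<in> fball S n \<and> proj S f = x \<and> (\<lambda>k. fnorm S (fsub S (u k) f)) \<longlonglongrightarrow> 0"
    using fc lim by blast
next
  fix r
  let ?B = "fball S n"
  let ?FB = "fibprod ?B (proj S)"
  have eqt: "subtopology (prod_topology (to_models S TE n) (to_models S TE n)) ?FB =
      subtopology (prod_topology TE TE) ?FB"
    unfolding prod_Tn[OF bb Kc] by (rule arg_cong[where f="subtopology _"]) (auto simp: fibprod_def)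
  have c: "continuous_map (subtopology (prod_topology TE TE) ?FB) TE (\<lambda>(f, g). fsub S f g)"
    by (rule continuous_map_from_subtopology_mono[OF sub_cont[OF bb Kc]])
       (auto simp: fibprod_def fball_def)
  have tsF: "topspace (subtopology (prod_topology TE TE) ?FB) = ?FB"
    by (auto simp: fibprod_def ts1 fball_def)
  have "openin (subtopology (prod_topology TE TE) ?FB)
     {p \<in> topspace (subtopology (prod_topology TE TE) ?FB). (\<lambda>(f, g). fsub S f g) p \<in> {f \<in> carr S. fnorm S f < r}}"
    by (rule openin_continuous_map_preimage[OF c bbD_no[OF bb]])
  moreover have "{p \<in> topspace (subtopology (prod_topology TE TE) ?FB). (\<lambda>(f, g). fsub S f g) p \<in> {f \<in> carr S. fnorm S f < r}}
     = {(f, g) \<in> ?FB. fnorm S (fsub S f g) < r}"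
    unfolding tsF using sub_in[OF bf1 Kc] by (auto simp: fibprod_def fball_def)
  ultimately show "openin (subtopology (prod_topology (to_models S TE n) (to_models S TE n)) ?FB)
              {(f, g) \<in> ?FB. fnorm S (fsub S f g) < r}" unfolding eqt by simp
next
  show "continuous_map (to_models S TE n) X (proj S)"
    unfolding Tn_eq[OF bb Kc] by (rule continuous_map_from_subtopology[OF bbD_pc[OF bb]])
next
  show "open_map (to_models S TE n) X (proj S)"
    unfolding open_map_def
  proof (intro allI impI)
    fix W assume "openin (to_models S TE n) W"
    then obtain W0 where W0: "openin TE W0" "W = W0 \<inter> fball S n"
      unfolding Tn_eq[OF bb Kc] openin_subtopology by blast
    show "openin X (proj S ` W)"
    proof (rule openin_subopen[THEN iffD2], rule ballI)
      fix x assume "x \<in> proj S ` W"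
      then obtain f where fW: "f \<in> W" and xf: "x = proj S f" by blast
      have fc: "f \<in> carr S" and fn: "fnorm S f \<le> n" using fW W0 by (auto simp: fball_def)
      have "openin (top_of_set K) {c \<in> topspace (top_of_set K). fsmul S c f \<in> W0}"
        by (rule openin_continuous_map_preimage[OF smul_cont_c[OF bb Kc fc] W0(1)])
      then have P: "openin (top_of_set K) {c \<in> K. fsmul S c f \<in> W0}" by simp
      have "1 \<in> {c \<in> K. fsmul S c f \<in> W0}"
        using smul1[OF bf1 Kc fc] fW W0 K_props(3)[OF Kc] by auto
      then obtain e where e: "e > 0" "ball 1 e \<inter> K \<subseteq> {c \<in> K. fsmul S c f \<in> W0}"
        using P unfolding openin_contains_ball by blast
      define t :: real where "t = max (1/2) (1 - e/2)"
      have t01: "0 < t" "t < 1" using e(1) by (auto simp: t_def)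
      have "dist (1::complex) (complex_of_real t) = dist (1::real) t"
        using dist_of_real[of "1::real" t] by simp
      also have "\<dots> < e" using e(1) by (auto simp: t_def dist_real_def max_def)
      finally have t: "0 < t" "t < 1" "dist 1 (complex_of_real t) < e" using t01 by auto
      have tK: "complex_of_real t \<in> K" using K_props(1)[OF Kc] .
      let ?g = "fsmul S (complex_of_real t) f"
      have gW0: "?g \<in> W0" using e(2) t(3) tK by auto
      have gc: "?g \<in> carr S" "proj S ?g = proj S f" using smul_in[OF bf1 Kc tK fc] by auto
      have "fnorm S ?g = t * fnorm S f" using nsmul[OF bf1 Kc tK fc] t by simp
      also have "\<dots> \<le> t * n" using fn t by (simp add: mult_left_mono)
      also have "\<dots> < n" using t n by simp
      finally have gn: "fnorm S ?g < n" .
      let ?N = "W0 \<inter> {h \<in> carr S. fnorm S h < n}"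
      have N: "openin TE ?N" using W0(1) bbD_no[OF bb] by blast
      have NW: "?N \<subseteq> W" using W0(2) by (auto simp: fball_def)
      have "openin X (proj S ` ?N)" using bbD_po[OF bb] N unfolding open_map_def by blast
      moreover have "x \<in> proj S ` ?N"
        using gW0 gc gn xf by (intro image_eqI[where x="?g"]) auto
      moreover have "proj S ` ?N \<subseteq> proj S ` W" using NW by blast
      ultimately show "\<exists>T. openin X T \<and> x \<in> T \<and> T \<subseteq> proj S ` W" by blast
    qed
  qed
next
  fix W f assume "openin (to_models S TE n) W" and fW: "f \<in> W"
  then obtain W0 where W0: "openin TE W0" "W = W0 \<inter> fball S n"
    unfolding Tn_eq[OF bb Kc] openin_subtopology by blast
  have fc: "f \<in> carr S" and fn: "fnorm S f \<le> n" using fW W0 by (auto simp: fball_def)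
  define x where "x = proj S f"
  have xX: "x \<in> topspace X" using projc[OF bf1 Kc fc] x_def by simp
  let ?Z = "subtopology (prod_topology TE TE) (fibprod (carr S) (proj S))"
  have P: "openin ?Z {p \<in> topspace ?Z. (\<lambda>(f, g). fadd S f g) p \<in> W0}"
    by (rule openin_continuous_map_preimage[OF bbD_ad[OF bb] W0(1)])
  then obtain Q where Q: "openin (prod_topology TE TE) Q"
    "{p \<in> topspace ?Z. (\<lambda>(f, g). fadd S f g) p \<in> W0} = Q \<inter> fibprod (carr S) (proj S)"
    unfolding openin_subtopology by blast
  have z: "fzero S x \<in> carr S" "proj S (fzero S x) = x" using zero_in[OF bf1 Kc xX] by auto
  have fz: "fadd S f (fzero S x) = f" using add_zero_r[OF bf1 Kc fc] x_def by simp
  have "(f, fzero S x) \<in> fibprod (carr S) (proj S)" using z fc x_def by (simp add: fibprod_def)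
  then have "(f, fzero S x) \<in> {p \<in> topspace ?Z. (\<lambda>(f, g). fadd S f g) p \<in> W0}"
    unfolding tsZ[OF bb Kc] using fz fW W0(2) by simp
  then have fQ: "(f, fzero S x) \<in> Q" using Q(2) by blast
  have "\<exists>U V. openin TE U \<and> openin TE V \<and> f \<in> U \<and> fzero S x \<in> V \<and> U \<times> V \<subseteq> Q"
    using openin_prod_topology_alt[THEN iffD1, OF Q(1), rule_format, OF fQ] .
  then obtain O1 O2 where O: "openin TE O1" "openin TE O2" "f \<in> O1" "fzero S x \<in> O2" "O1 \<times> O2 \<subseteq> Q"
    by blast
  obtain U r where U: "openin X U" "x \<in> U" "r > 0"
      "{f \<in> carr S. proj S f \<in> U \<and> fnorm S f < r} \<subseteq> O2"
    using bbD_z2[OF bb xX O(2) O(4)] by blast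
  let ?V1 = "{h \<in> topspace TE. proj S h \<in> U}"
  have V1: "openin TE ?V1" by (rule openin_continuous_map_preimage[OF bbD_pc[OF bb] U(1)])
  let ?V = "(O1 \<inter> ?V1) \<inter> fball S n"
  have Vo: "openin (to_models S TE n) ?V"
    unfolding Tn_eq[OF bb Kc] by (rule openin_subtopology_Int) (use O(1) V1 in blast)
  have fV: "f \<in> ?V" using O(3) fc U(2) x_def fn ts1 by (auto simp: fball_def)
  let ?Ve = "{g \<in> fball S n. \<exists>h\<in>?V. proj S g = proj S h \<and> fnorm S (fsub S g h) < r}"
  have "?V \<subseteq> ?Ve"
  proof
    fix h assume h: "h \<in> ?V"
    then have "h \<in> carr S" by (auto simp: fball_def)
    then have "fnorm S (fsub S h h) = 0" using nsub0[OF bf1 Kc] by blast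
    then show "h \<in> ?Ve" using h U(3) by auto
  qed
  moreover have "?Ve \<subseteq> W"
  proof
    fix g assume "g \<in> ?Ve"
    then obtain h where g: "g \<in> fball S n" and h: "h \<in> ?V" and pgh: "proj S g = proj S h"
      and d: "fnorm S (fsub S g h) < r" by blast
    have gc: "g \<in> carr S" and hc: "h \<in> carr S" using g h by (auto simp: fball_def)
    let ?k = "fsub S g h"
    have k: "?k \<in> carr S" "proj S ?k = proj S h" using sub_in[OF bf1 Kc gc hc] pgh by auto
    have "proj S h \<in> U" using h by auto
    then have "?k \<in> O2" using U(4) k d by auto
    moreover have "h \<in> O1" using h by auto
    ultimately have "(h, ?k) \<in> Q" using O(5) by blast
    moreover have "(h, ?k) \<in> fibprod (carr S) (proj S)" using k hc by (auto simp: fibprod_def)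
    ultimately have "(h, ?k) \<in> {p \<in> topspace ?Z. (\<lambda>(f, g). fadd S f g) p \<in> W0}" using Q(2) by blast
    then have "fadd S h ?k \<in> W0" by auto
    moreover have "fadd S h ?k = g" using add_sub_cancel[OF bf1 Kc hc gc] pgh by simp
    ultimately show "g \<in> W" using g W0(2) by auto
  qed
  ultimately show "\<exists>V e. openin (to_models S TE n) V \<and> f \<in> V \<and> e > 0 \<and>
         V \<subseteq> {g \<in> fball S n. \<exists>h \<in> V. proj S g = proj S h \<and> fnorm S (fsub S g h) < e} \<and>
         {g \<in> fball S n. \<exists>h \<in> V. proj S g = proj S h \<and> fnorm S (fsub S g h) < e} \<subseteq> W"
    using Vo fV U(3) by blast
qed


lemma part1: "model_bundle K X S (to_models S TE)"
  unfolding model_bundle_def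
proof (intro conjI allI impI ballI)
  show "banach_fibres K X S" by (rule bf1)
next
  fix n :: nat assume n: "1 \<le> n"
  show "topspace (to_models S TE n) = fball S n" by (rule ts_Tn[OF bb Kc])
  show "cm_bundle X (to_models S TE n) (proj S) (\<lambda>f g. fnorm S (fsub S f g)) (2 * real n)"
    using cm1 n by simp
next
  fix n m :: nat assume "1 \<le> n \<and> n < m"
  then have "fball S n \<subseteq> fball S m" by (intro fball_mono) simp
  then show "continuous_map (to_models S TE n) (to_models S TE m) id"
    unfolding Tn_eq[OF bb Kc] continuous_map_in_subtopology
    by (auto intro: continuous_map_from_subtopology continuous_map_id)
next
  fix n m :: nat assume "1 \<le> n \<and> 1 \<le> m"
  let ?A = "(fball S n \<times> fball S m) \<inter> fibprod (carr S) (proj S)"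
  have c: "continuous_map (subtopology (prod_topology TE TE) ?A) TE (\<lambda>(f, g). fadd S f g)"
    by (rule continuous_map_from_subtopology_mono[OF bbD_ad[OF bb]]) blast
  have img: "(\<lambda>(f, g). fadd S f g) \<in> topspace (subtopology (prod_topology TE TE) ?A) \<rightarrow> fball S (n + m)"
  proof
    fix p assume "p \<in> topspace (subtopology (prod_topology TE TE) ?A)"
    then obtain f g where p: "p = (f, g)" "f \<in> carr S" "g \<in> carr S" "proj S g = proj S f"
      "fnorm S f \<le> n" "fnorm S g \<le> m"
      by (cases p) (auto simp: fibprod_def fball_def)
    have "fnorm S (fadd S f g) \<le> fnorm S f + fnorm S g" using ntri[OF bf1 Kc p(2,3,4)] .
    then show "(\<lambda>(f, g). fadd S f g) p \<in> fball S (n + m)"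
      using p add_in[OF bf1 Kc p(2,3,4)] by (auto simp: fball_def)
  qed
  show "continuous_map (subtopology (prod_topology (to_models S TE n) (to_models S TE m))
      (fibprod (carr S) (proj S))) (to_models S TE (n + m)) (\<lambda>(f, g). fadd S f g)"
    unfolding prod_Tn[OF bb Kc] unfolding Tn_eq[OF bb Kc] continuous_map_in_subtopology
    using c img by blast
next
  fix c :: complex and n :: nat assume c: "c \<in> K" "c \<noteq> 0" and n: "1 \<le> n"
  have img: "fsmul S c \<in> topspace (subtopology TE (fball S n)) \<rightarrow> fball S (nat \<lceil>cmod c * real n\<rceil>)"
  proof
    fix f assume "f \<in> topspace (subtopology TE (fball S n))"
    then have f: "f \<in> carr S" "fnorm S f \<le> n" by (auto simp: fball_def ts1)
    have "fnorm S (fsmul S c f) = cmod c * fnorm S f" using nsmul[OF bf1 Kc c(1) f(1)] .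
    also have "\<dots> \<le> cmod c * n" using f(2) by (simp add: mult_left_mono)
    also have "\<dots> \<le> real (nat \<lceil>cmod c * real n\<rceil>)" by (rule real_nat_ceiling_ge)
    finally show "fsmul S c f \<in> fball S (nat \<lceil>cmod c * real n\<rceil>)"
      using smul_in[OF bf1 Kc c(1) f(1)] by (auto simp: fball_def)
  qed
  show "continuous_map (to_models S TE n) (to_models S TE (nat \<lceil>cmod c * real n\<rceil>)) (fsmul S c)"
    unfolding Tn_eq[OF bb Kc] continuous_map_in_subtopology
    using continuous_map_from_subtopology[OF smul_cont_f[OF bb Kc c(1)]] img by blast
next
  have "fzero S \<in> topspace X \<rightarrow> fball S 1"
    using zero_in[OF bf1 Kc] nzero[OF bf1 Kc] by (auto simp: fball_def)
  then show "continuous_map X (to_models S TE 1) (fzero S)"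
    unfolding Tn_eq[OF bb Kc] continuous_map_in_subtopology using zero_cont[OF bb Kc] by blast
qed

end


lemma mbD:
  assumes "model_bundle K X S T"
  shows mbD_bf: "banach_fibres K X S"
   and mbD_ts: "\<And>n. n \<ge> 1 \<Longrightarrow> topspace (T n) = fball S n"
   and mbD_cm: "\<And>n. n \<ge> 1 \<Longrightarrow> cm_bundle X (T n) (proj S) (\<lambda>f g. fnorm S (fsub S f g)) (2 * real n)"
   and mbD_inc: "\<And>n m. 1 \<le> n \<Longrightarrow> n < m \<Longrightarrow> continuous_map (T n) (T m) id"
   and mbD_add: "\<And>n m. 1 \<le> n \<Longrightarrow> 1 \<le> m \<Longrightarrow>
        continuous_map (subtopology (prod_topology (T n) (T m)) (fibprod (carr S) (proj S)))
          (T (n + m)) (\<lambda>(f, g). fadd S f g)"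
   and mbD_sm: "\<And>c n. c \<in> K \<Longrightarrow> c \<noteq> 0 \<Longrightarrow> n \<ge> 1 \<Longrightarrow>
        continuous_map (T n) (T (nat \<lceil>cmod c * real n\<rceil>)) (fsmul S c)"
   and mbD_z: "continuous_map X (T 1) (fzero S)"
  using assms unfolding model_bundle_def by blast+

lemma cmD:
  assumes "cm_bundle X T p d k"
  shows cmD_usc: "\<And>r. openin (subtopology (prod_topology T T) (fibprod (topspace T) p))
              {(f, g) \<in> fibprod (topspace T) p. d f g < r}"
   and cmD_pc: "continuous_map T X p" and cmD_po: "open_map T X p"
   and cmD_ve: "\<And>W f. openin T W \<Longrightarrow> f \<in> W \<Longrightarrow> (\<exists>V e. openin T V \<and> f \<in> V \<and> e > 0 \<and>
           V \<subseteq> {g \<in> topspace T. \<exists>h \<in> V. p g = p h \<and> d g h < e} \<and>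
           {g \<in> topspace T. \<exists>h \<in> V. p g = p h \<and> d g h < e} \<subseteq> W)"
  using assms unfolding cm_bundle_def Let_def by blast+

context
  fixes K :: "complex set" and X :: "'x topology" and S :: "('x, 'e) fibred" and T :: "nat \<Rightarrow> 'e topology"
  assumes mb: "model_bundle K X S T" and Kc: "K = range complex_of_real \<or> K = UNIV"
begin

lemmas bf2 = mbD_bf[OF mb]

lemma inc_le: "1 \<le> n \<Longrightarrow> n \<le> m \<Longrightarrow> continuous_map (T n) (T m) id"
  using mbD_inc[OF mb, of n m] by (cases "n = m") auto

lemma zero_cont_n: "n \<ge> 1 \<Longrightarrow> continuous_map X (T n) (fzero S)"
  using continuous_map_compose[OF mbD_z[OF mb] inc_le[of 1 n]] by (simp add: o_def)

lemma proj_cont_n: "n \<ge> 1 \<Longrightarrow> continuous_map (T n) X (proj S)"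
  using cmD_pc[OF mbD_cm[OF mb]] .

lemma ball_open:
  assumes n: "n \<ge> 1"
  shows "openin (T n) {f \<in> fball S n. fnorm S f < r}"
proof -
  let ?FB = "fibprod (topspace (T n)) (proj S)"
  let ?Z = "subtopology (prod_topology (T n) (T n)) ?FB"
  let ?phi = "\<lambda>f. (f, fzero S (proj S f))"
  have c0: "continuous_map (T n) (T n) (\<lambda>f. fzero S (proj S f))"
    using continuous_map_compose[OF proj_cont_n[OF n] zero_cont_n[OF n]] by (simp add: o_def)
  have c: "continuous_map (T n) ?Z ?phi"
    unfolding continuous_map_in_subtopology
  proof
    show "continuous_map (T n) (prod_topology (T n) (T n)) ?phi"
      using c0 by (intro continuous_map_pairedI continuous_map_id[unfolded id_def])
    show "?phi \<in> topspace (T n) \<rightarrow> ?FB"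
    proof
      fix f assume f: "f \<in> topspace (T n)"
      then have fc: "f \<in> carr S" using mbD_ts[OF mb n] by (auto simp: fball_def)
      have px: "proj S f \<in> topspace X" using projc[OF bf2 Kc fc] .
      have "fzero S (proj S f) \<in> fball S n"
        using zero_in[OF bf2 Kc px] nzero[OF bf2 Kc px] by (auto simp: fball_def)
      then show "?phi f \<in> ?FB" using f zero_in[OF bf2 Kc px] mbD_ts[OF mb n]
        by (auto simp: fibprod_def)
    qed
  qed
  have "openin (T n) {f \<in> topspace (T n). ?phi f \<in> {(f, g) \<in> ?FB. fnorm S (fsub S f g) < r}}"
    by (rule openin_continuous_map_preimage[OF c cmD_usc[OF mbD_cm[OF mb n]]])
  moreover have "{f \<in> topspace (T n). ?phi f \<in> {(f, g) \<in> ?FB. fnorm S (fsub S f g) < r}} =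
      {f \<in> fball S n. fnorm S f < r}"
  proof (rule set_eqI)
    fix f
    show "(f \<in> {f \<in> topspace (T n). ?phi f \<in> {(f, g) \<in> ?FB. fnorm S (fsub S f g) < r}}) =
      (f \<in> {f \<in> fball S n. fnorm S f < r})"
    proof (cases "f \<in> fball S n")
      case False then show ?thesis using mbD_ts[OF mb n] by simp
    next
      case True
      then have ft: "f \<in> topspace (T n)" using mbD_ts[OF mb n] by simp
      then have fc: "f \<in> carr S" using mbD_ts[OF mb n] by (auto simp: fball_def)
      have px: "proj S f \<in> topspace X" using projc[OF bf2 Kc fc] .
      have "fzero S (proj S f) \<in> fball S n"
        using zero_in[OF bf2 Kc px] nzero[OF bf2 Kc px] by (auto simp: fball_def)
      then have "?phi f \<in> ?FB" using ft zero_in[OF bf2 Kc px] mbD_ts[OF mb n]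
        by (auto simp: fibprod_def)
      then show ?thesis using sub_zero[OF bf2 Kc fc] True ft by auto
    qed
  qed
  ultimately show ?thesis by simp
qed


lemma emb_point:
  assumes n: "1 \<le> n" and nm: "n \<le> m" and U: "openin (T n) U" and fU: "f \<in> U"
  shows "\<exists>G. openin (T m) G \<and> f \<in> G \<and> G \<inter> fball S n \<subseteq> U"
proof -
  have m: "1 \<le> m" using n nm by simp
  have tsn: "topspace (T n) = fball S n" and tsm: "topspace (T m) = fball S m"
    using mbD_ts[OF mb n] mbD_ts[OF mb m] by auto
  have Bnm: "fball S n \<subseteq> fball S m" using fball_mono[OF nm] .
  have fn: "f \<in> fball S n" using openin_subset[OF U] fU tsn by blast
  obtain V e where V: "openin (T n) V" "f \<in> V" "e > 0"
    "{g \<in> topspace (T n). \<exists>h \<in> V. proj S g = proj S h \<and> fnorm S (fsub S g h) < e} \<subseteq> U"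
    using cmD_ve[OF mbD_cm[OF mb n] U fU] by blast
  let ?FB = "fibprod (topspace (T m)) (proj S)"
  let ?D = "{(a, b) \<in> ?FB. fnorm S (fsub S a b) < e}"
  have D: "openin (subtopology (prod_topology (T m) (T m)) ?FB) ?D"
    by (rule cmD_usc[OF mbD_cm[OF mb m]])
  then obtain Q where Q: "openin (prod_topology (T m) (T m)) Q" "?D = Q \<inter> ?FB"
    unfolding openin_subtopology by blast
  have fc: "f \<in> carr S" using fn by (auto simp: fball_def)
  have "fnorm S (fsub S f f) = 0" using nsub0[OF bf2 Kc fc fc] by simp
  then have "(f, f) \<in> ?D" using fn Bnm tsm V(3) by (auto simp: fibprod_def)
  then have fQ: "(f, f) \<in> Q" using Q(2) by blast
  have "\<exists>U V. openin (T m) U \<and> openin (T m) V \<and> f \<in> U \<and> f \<in> V \<and> U \<times> V \<subseteq> Q"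
    using openin_prod_topology_alt[THEN iffD1, OF Q(1), rule_format, OF fQ] .
  then obtain O1 O2 where G: "openin (T m) O1" "openin (T m) O2" "f \<in> O1" "f \<in> O2" "O1 \<times> O2 \<subseteq> Q"
    by blast
  have "openin (T n) {x \<in> topspace (T n). id x \<in> O2}"
    by (rule openin_continuous_map_preimage[OF inc_le[OF n nm] G(2)])
  moreover have "{x \<in> topspace (T n). id x \<in> O2} = fball S n \<inter> O2" using tsn by auto
  ultimately have O2n: "openin (T n) (fball S n \<inter> O2)" by simp
  let ?V' = "V \<inter> (fball S n \<inter> O2)"
  have V': "openin (T n) ?V'" using V(1) O2n by blast
  let ?P = "proj S ` ?V'"
  have P: "openin X ?P" using cmD_po[OF mbD_cm[OF mb n]] V' unfolding open_map_def by blast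
  let ?O = "O1 \<inter> {a \<in> topspace (T m). proj S a \<in> ?P}"
  have Oo: "openin (T m) ?O"
    using G(1) openin_continuous_map_preimage[OF proj_cont_n[OF m] P] by blast
  have fO: "f \<in> ?O" using G(3) fn Bnm tsm V(2) G(4) by auto
  have "?O \<inter> fball S n \<subseteq> U"
  proof
    fix a assume a: "a \<in> ?O \<inter> fball S n"
    then obtain h where h: "h \<in> ?V'" "proj S a = proj S h" by auto
    have "(a, h) \<in> Q" using a h G(5) by blast
    moreover have "(a, h) \<in> ?FB" using a h Bnm tsm by (auto simp: fibprod_def)
    ultimately have "(a, h) \<in> ?D" using Q(2) by blast
    then have "fnorm S (fsub S a h) < e" by simp
    then have "a \<in> {g \<in> topspace (T n). \<exists>h \<in> V. proj S g = proj S h \<and> fnorm S (fsub S g h) < e}"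
      using a h tsn by auto
    then show "a \<in> U" using V(4) by blast
  qed
  then show ?thesis using Oo fO by blast
qed

lemma emb_step:
  assumes n: "1 \<le> n" and nm: "n \<le> m" and U: "openin (T n) U"
  shows "\<exists>G. openin (T m) G \<and> G \<inter> fball S n = U"
proof -
  have "\<forall>f\<in>U. \<exists>G. openin (T m) G \<and> f \<in> G \<and> G \<inter> fball S n \<subseteq> U"
    using emb_point[OF n nm U] by blast
  then obtain Of where Of: "\<And>f. f \<in> U \<Longrightarrow> openin (T m) (Of f) \<and> f \<in> Of f \<and> Of f \<inter> fball S n \<subseteq> U"
    by metis
  have Un: "U \<subseteq> fball S n" using openin_subset[OF U] mbD_ts[OF mb n] by simp
  have "openin (T m) (\<Union>f\<in>U. Of f)" using Of by blast
  moreover have "(\<Union>f\<in>U. Of f) \<inter> fball S n = U"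
  proof
    show "(\<Union>f\<in>U. Of f) \<inter> fball S n \<subseteq> U" using Of by blast
    show "U \<subseteq> (\<Union>f\<in>U. Of f) \<inter> fball S n" using Of Un by blast
  qed
  ultimately show ?thesis by blast
qed


end

primrec extseq :: "(nat \<Rightarrow> 'e topology) \<Rightarrow> ('x, 'e) fibred \<Rightarrow> nat \<Rightarrow> 'e set \<Rightarrow> nat \<Rightarrow> 'e set" where
  "extseq T S n U 0 = U"
| "extseq T S n U (Suc j) =
     (SOME G. openin (T (n + Suc j)) G \<and> G \<inter> fball S (n + j) = extseq T S n U j)"

context
  fixes K :: "complex set" and X :: "'x topology" and S :: "('x, 'e) fibred" and T :: "nat \<Rightarrow> 'e topology"
  assumes mb: "model_bundle K X S T" and Kc: "K = range complex_of_real \<or> K = UNIV"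
begin

lemma openF: "openin (from_models S T) U \<longleftrightarrow> U \<subseteq> carr S \<and> (\<forall>n\<ge>1. openin (T n) (U \<inter> fball S n))"
  unfolding openin_from_models by (simp add: mbD_ts[OF mb])

lemma tsF: "topspace (from_models S T) = carr S"
  by (rule topspace_from_models) (simp add: mbD_ts[OF mb] fball_sub)

lemma extseq_open:
  assumes n: "1 \<le> n" and U: "openin (T n) U"
  shows "openin (T (n + j)) (extseq T S n U j) \<and>
         extseq T S n U (Suc j) \<inter> fball S (n + j) = extseq T S n U j"
proof (induction j)
  case 0
  have ex: "\<exists>G. openin (T (n + Suc 0)) G \<and> G \<inter> fball S (n + 0) = extseq T S n U 0"
    using emb_step[OF mb Kc n _ U, of "n + Suc 0"] by simp
  show ?case using U someI_ex[OF ex] by simp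
next
  case (Suc j)
  have o: "openin (T (n + Suc j)) (extseq T S n U (Suc j))"
  proof -
    have ex: "\<exists>G. openin (T (n + Suc j)) G \<and> G \<inter> fball S (n + j) = extseq T S n U j"
      using emb_step[OF mb Kc _ _ Suc.IH[THEN conjunct1], of "n + Suc j"] n by simp
    show ?thesis using someI_ex[OF ex] by simp
  qed
  have ex: "\<exists>G. openin (T (n + Suc (Suc j))) G \<and> G \<inter> fball S (n + Suc j) = extseq T S n U (Suc j)"
    using emb_step[OF mb Kc _ _ o, of "n + Suc (Suc j)"] n by simp
  show ?case using o someI_ex[OF ex] by simp
qed

lemma extseq_sub:
  assumes n: "1 \<le> n" and U: "openin (T n) U"
  shows "extseq T S n U j \<subseteq> fball S (n + j)"
  using openin_subset[OF extseq_open[OF n U, of j, THEN conjunct1]] mbD_ts[OF mb, of "n + j"] n by simp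

lemma extseq_res:
  assumes n: "1 \<le> n" and U: "openin (T n) U"
  shows "i \<le> j \<Longrightarrow> extseq T S n U j \<inter> fball S (n + i) = extseq T S n U i"
proof (induction j)
  case 0 then show ?case using extseq_sub[OF n U, of 0] by auto
next
  case (Suc j)
  show ?case
  proof (cases "i = Suc j")
    case True then show ?thesis using extseq_sub[OF n U, of "Suc j"] by auto
  next
    case False
    then have ij: "i \<le> j" using Suc.prems by simp
    have "fball S (n + i) \<subseteq> fball S (n + j)" by (rule fball_mono) (use ij in simp)
    then have "extseq T S n U (Suc j) \<inter> fball S (n + i) =
        (extseq T S n U (Suc j) \<inter> fball S (n + j)) \<inter> fball S (n + i)" by blast
    also have "\<dots> = extseq T S n U j \<inter> fball S (n + i)"
      using extseq_open[OF n U, of j] by simp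
    also have "\<dots> = extseq T S n U i" using Suc.IH[OF ij] .
    finally show ?thesis .
  qed
qed

lemma ext_open:
  assumes n: "1 \<le> n" and U: "openin (T n) U"
  shows "\<exists>V. openin (from_models S T) V \<and> V \<inter> fball S n = U"
proof -
  let ?E = "extseq T S n U"
  let ?V = "\<Union>j. ?E j"
  have VE: "?V \<inter> fball S (n + i) = ?E i" for i
  proof
    show "?E i \<subseteq> ?V \<inter> fball S (n + i)" using extseq_sub[OF n U, of i] by blast
    show "?V \<inter> fball S (n + i) \<subseteq> ?E i"
    proof
      fix x assume "x \<in> ?V \<inter> fball S (n + i)"
      then obtain j where x: "x \<in> ?E j" "x \<in> fball S (n + i)" by blast
      show "x \<in> ?E i"
      proof (cases "j \<le> i")
        case True
        then have "?E i \<inter> fball S (n + j) = ?E j" by (rule extseq_res[OF n U])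
        then show ?thesis using x by blast
      next
        case False
        then have "?E j \<inter> fball S (n + i) = ?E i" by (intro extseq_res[OF n U]) simp
        then show ?thesis using x by blast
      qed
    qed
  qed
  have "openin (from_models S T) ?V"
    unfolding openF
  proof (intro conjI allI impI)
    show "?V \<subseteq> carr S" using extseq_sub[OF n U] by (auto simp: fball_def)
    fix k :: nat assume k: "1 \<le> k"
    show "openin (T k) (?V \<inter> fball S k)"
    proof (cases "n \<le> k")
      case True
      then have "?V \<inter> fball S k = ?E (k - n)" using VE[of "k - n"] by simp
      then show ?thesis using extseq_open[OF n U, of "k - n"] True by simp
    next
      case False
      then have kn: "k \<le> n" by simp
      have "fball S k \<subseteq> fball S n" using fball_mono[OF kn] .
      then have eq: "?V \<inter> fball S k = U \<inter> fball S k" using VE[of 0] by auto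
      have "openin (T k) {x \<in> topspace (T k). id x \<in> U}"
        by (rule openin_continuous_map_preimage[OF inc_le[OF mb Kc k kn] U])
      moreover have "{x \<in> topspace (T k). id x \<in> U} = U \<inter> fball S k"
        using mbD_ts[OF mb k] by auto
      ultimately show ?thesis using eq by simp
    qed
  qed
  moreover have "?V \<inter> fball S n = U" using VE[of 0] by simp
  ultimately show ?thesis by blast
qed

lemma embed:
  assumes n: "1 \<le> n"
  shows "subtopology (from_models S T) (fball S n) = T n"
proof (rule topology_eq[THEN iffD2], intro allI)
  fix A
  show "openin (subtopology (from_models S T) (fball S n)) A = openin (T n) A"
  proof
    assume "openin (subtopology (from_models S T) (fball S n)) A"
    then obtain V where V: "openin (from_models S T) V" "A = V \<inter> fball S n"
      unfolding openin_subtopology by blast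
    then show "openin (T n) A" using n unfolding openF by blast
  next
    assume "openin (T n) A"
    then obtain V where "openin (from_models S T) V" "V \<inter> fball S n = A"
      using ext_open[OF n] by blast
    then show "openin (subtopology (from_models S T) (fball S n)) A"
      unfolding openin_subtopology by blast
  qed
qed

lemma openF_norm: "openin (from_models S T) {f \<in> carr S. fnorm S f < r}"
  unfolding openF
proof (intro conjI allI impI)
  show "{f \<in> carr S. fnorm S f < r} \<subseteq> carr S" by blast
  fix n :: nat assume n: "1 \<le> n"
  have "{f \<in> carr S. fnorm S f < r} \<inter> fball S n = {f \<in> fball S n. fnorm S f < r}"
    by (auto simp: fball_def)
  then show "openin (T n) ({f \<in> carr S. fnorm S f < r} \<inter> fball S n)"
    using ball_open[OF mb Kc n] by simp
qed

lemma local_open: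
  assumes n: "1 \<le> n" and A: "openin (T n) A"
  shows "openin (from_models S T) (A \<inter> {f \<in> carr S. fnorm S f < real n})"
proof -
  obtain V where V: "openin (from_models S T) V" "V \<inter> fball S n = A" using ext_open[OF n A] by blast
  have "A \<inter> {f \<in> carr S. fnorm S f < real n} = V \<inter> {f \<in> carr S. fnorm S f < real n}"
    using V(2) by (auto simp: fball_def)
  then show ?thesis using V(1) openF_norm by auto
qed

end


context
  fixes K :: "complex set" and X :: "'x topology" and S :: "('x, 'e) fibred" and T :: "nat \<Rightarrow> 'e topology"
  assumes mb: "model_bundle K X S T" and Kc: "K = range complex_of_real \<or> K = UNIV"
begin

lemmas bf3 = mbD_bf[OF mb]

lemma proj_cont_F: "continuous_map (from_models S T) X (proj S)"
  unfolding continuous_map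
proof (intro conjI allI impI)
  show "proj S ` topspace (from_models S T) \<subseteq> topspace X"
    using projc[OF bf3 Kc] tsF[OF mb Kc] by auto
  fix U assume U: "openin X U"
  show "openin (from_models S T) {x \<in> topspace (from_models S T). proj S x \<in> U}"
    unfolding openF[OF mb Kc] tsF[OF mb Kc]
  proof (intro conjI allI impI)
    show "{x \<in> carr S. proj S x \<in> U} \<subseteq> carr S" by blast
    fix n :: nat assume n: "1 \<le> n"
    have "openin (T n) {x \<in> topspace (T n). proj S x \<in> U}"
      by (rule openin_continuous_map_preimage[OF proj_cont_n[OF mb Kc n] U])
    moreover have "{x \<in> topspace (T n). proj S x \<in> U} = {x \<in> carr S. proj S x \<in> U} \<inter> fball S n"
      using mbD_ts[OF mb n] by (auto simp: fball_def)
    ultimately show "openin (T n) ({x \<in> carr S. proj S x \<in> U} \<inter> fball S n)" by simp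
  qed
qed

lemma proj_open_F: "open_map (from_models S T) X (proj S)"
  unfolding open_map_def
proof (intro allI impI)
  fix U assume U: "openin (from_models S T) U"
  show "openin X (proj S ` U)"
  proof (rule openin_subopen[THEN iffD2], rule ballI)
    fix x assume "x \<in> proj S ` U"
    then obtain f where fU: "f \<in> U" and xf: "x = proj S f" by blast
    have fc: "f \<in> carr S" using U fU unfolding openF[OF mb Kc] by blast
    obtain n where n: "n \<ge> 1" "f \<in> fball S n" using in_fball_large[OF fc] by blast
    have "openin (T n) (U \<inter> fball S n)" using U n unfolding openF[OF mb Kc] by blast
    then have "openin X (proj S ` (U \<inter> fball S n))"
      using cmD_po[OF mbD_cm[OF mb n(1)]] unfolding open_map_def by blast
    moreover have "x \<in> proj S ` (U \<inter> fball S n)" using fU n xf by blast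
    ultimately show "\<exists>T. openin X T \<and> x \<in> T \<and> T \<subseteq> proj S ` U" by blast
  qed
qed

lemma smul_scont:
  assumes c0: "c0 \<in> K" and n: "1 \<le> n" and M: "1 \<le> M" and le: "cmod c0 * real n \<le> real M"
  shows "continuous_map (T n) (T M) (fsmul S c0)"
proof (cases "c0 = 0")
  case True
  have "continuous_map (T n) (T M) (fzero S \<circ> proj S)"
    by (rule continuous_map_compose[OF proj_cont_n[OF mb Kc n] zero_cont_n[OF mb Kc M]])
  then show ?thesis
  proof (rule continuous_map_eq)
    fix g assume "g \<in> topspace (T n)"
    then have "g \<in> carr S" using mbD_ts[OF mb n] by (auto simp: fball_def)
    then show "(fzero S \<circ> proj S) g = fsmul S c0 g" using smul0[OF bf3 Kc] True by simp
  qed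
next
  case False
  let ?k = "nat \<lceil>cmod c0 * real n\<rceil>"
  have pos: "0 < cmod c0 * real n" using False n by simp
  have k1: "1 \<le> ?k" using pos by linarith
  have "\<lceil>cmod c0 * real n\<rceil> \<le> \<lceil>real M\<rceil>" by (rule ceiling_mono[OF le])
  then have "nat \<lceil>cmod c0 * real n\<rceil> \<le> nat \<lceil>real M\<rceil>" by (rule nat_mono)
  then have kM: "?k \<le> M" by (simp only: ceiling_of_nat nat_int)
  show ?thesis
    using continuous_map_compose[OF mbD_sm[OF mb c0 False n] inc_le[OF mb Kc k1 kM]] by simp
qed

lemma smul_cont_F: "continuous_map (prod_topology (top_of_set K) (from_models S T)) (from_models S T)
      (\<lambda>(c, f). fsmul S c f)"
  unfolding continuous_map
proof (intro conjI allI impI)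
  show "(\<lambda>(c, f). fsmul S c f) ` topspace (prod_topology (top_of_set K) (from_models S T))
      \<subseteq> topspace (from_models S T)"
    using smul_in[OF bf3 Kc] by (auto simp: tsF[OF mb Kc])
  fix W assume W: "openin (from_models S T) W"
  let ?P = "{p \<in> topspace (prod_topology (top_of_set K) (from_models S T)). (\<lambda>(c, f). fsmul S c f) p \<in> W}"
  show "openin (prod_topology (top_of_set K) (from_models S T)) ?P"
    unfolding openin_prod_topology_alt
  proof (intro allI impI)
    fix c0 f0 assume p0: "(c0, f0) \<in> ?P"
    then have c0: "c0 \<in> K" and f0: "f0 \<in> carr S" and cW: "fsmul S c0 f0 \<in> W"
      by (auto simp: tsF[OF mb Kc])
    obtain n where n: "n \<ge> 1" "f0 \<in> fball S n" "fnorm S f0 < real n" using in_fball_large[OF f0] by blast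
    define M where "M = nat \<lceil>(cmod c0 + 1) * real n\<rceil>"
    have MB: "(cmod c0 + 1) * real n \<le> real M" unfolding M_def by (rule real_nat_ceiling_ge)
    have "1 * 1 \<le> (cmod c0 + 1) * real n" using n(1) by (intro mult_mono) auto
    then have M1: "1 \<le> M" using MB by linarith
    have le0: "cmod c0 * real n \<le> real M" using MB n(1) by (simp add: algebra_simps)
    have WM: "openin (T M) (W \<inter> fball S M)" using W M1 unfolding openF[OF mb Kc] by blast
    have nf0: "0 \<le> fnorm S f0" using nnn[OF bf3 Kc f0] .
    have "fnorm S (fsmul S c0 f0) = cmod c0 * fnorm S f0" using nsmul[OF bf3 Kc c0 f0] .
    also have "\<dots> \<le> cmod c0 * real n" using n(3) by (simp add: mult_left_mono)
    finally have "fnorm S (fsmul S c0 f0) \<le> real M" using le0 by linarith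
    then have cWM: "fsmul S c0 f0 \<in> W \<inter> fball S M"
      using cW smul_in[OF bf3 Kc c0 f0] by (auto simp: fball_def)
    obtain V e where V: "openin (T M) V" "fsmul S c0 f0 \<in> V" "e > 0"
      "{g \<in> topspace (T M). \<exists>h \<in> V. proj S g = proj S h \<and> fnorm S (fsub S g h) < e} \<subseteq> W \<inter> fball S M"
      using cmD_ve[OF mbD_cm[OF mb M1] WM cWM] by blast
    let ?A = "{g \<in> topspace (T n). fsmul S c0 g \<in> V}"
    have A: "openin (T n) ?A"
      by (rule openin_continuous_map_preimage[OF smul_scont[OF c0 n(1) M1 le0] V(1)])
    let ?A' = "?A \<inter> {f \<in> carr S. fnorm S f < real n}"
    have A': "openin (from_models S T) ?A'" by (rule local_open[OF mb Kc n(1) A])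
    have f0A: "f0 \<in> ?A'" using n V(2) f0 mbD_ts[OF mb n(1)] by auto
    define d where "d = min 1 (e / real n)"
    have d: "d > 0" "d \<le> 1" "d * real n \<le> e" using V(3) n(1) by (auto simp: d_def min_def field_simps)
    let ?C = "K \<inter> ball c0 d"
    have C: "openin (top_of_set K) ?C" by (rule openin_open_Int) simp
    have c0C: "c0 \<in> ?C" using c0 d by simp
    have "?C \<times> ?A' \<subseteq> ?P"
    proof
      fix p assume "p \<in> ?C \<times> ?A'"
      then obtain c g where p: "p = (c, g)" "c \<in> K" "dist c0 c < d" "g \<in> carr S" "fnorm S g < real n"
        "fsmul S c0 g \<in> V" by auto
      have cg: "fsmul S c g \<in> carr S" "proj S (fsmul S c g) = proj S g"
        using smul_in[OF bf3 Kc p(2) p(4)] by auto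
      have c0g: "fsmul S c0 g \<in> carr S" "proj S (fsmul S c0 g) = proj S g"
        using smul_in[OF bf3 Kc c0 p(4)] by auto
      have ng: "0 \<le> fnorm S g" using nnn[OF bf3 Kc p(4)] .
      have cc: "cmod (c - c0) < d" using p(3) by (simp add: dist_norm norm_minus_commute)
      have "cmod c \<le> cmod c0 + cmod (c - c0)" using norm_triangle_ineq[of c0 "c - c0"] by simp
      then have cle: "cmod c \<le> cmod c0 + 1" using cc d(2) by linarith
      have "fnorm S (fsmul S c g) = cmod c * fnorm S g" using nsmul[OF bf3 Kc p(2) p(4)] .
      also have "\<dots> \<le> (cmod c0 + 1) * real n" using cle p(5) ng by (intro mult_mono) auto
      finally have "fnorm S (fsmul S c g) \<le> real M" using MB by linarith
      then have cgM: "fsmul S c g \<in> topspace (T M)" using cg mbD_ts[OF mb M1] by (auto simp: fball_def)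
      have "fsub S (fsmul S c g) (fsmul S c0 g) = fsmul S (c - c0) g"
        by (rule smul_sub[OF bf3 Kc p(2) c0 p(4)])
      moreover have cdK: "c - c0 \<in> K" using K_props(6)[OF Kc p(2) c0] .
      ultimately have "fnorm S (fsub S (fsmul S c g) (fsmul S c0 g)) = cmod (c - c0) * fnorm S g"
        using nsmul[OF bf3 Kc cdK p(4)] by simp
      also have "\<dots> \<le> cmod (c - c0) * real n" using p(5) by (intro mult_left_mono) auto
      also have "\<dots> < d * real n" using cc n(1) by (intro mult_strict_right_mono) auto
      also have "\<dots> \<le> e" using d(3) .
      finally have "fnorm S (fsub S (fsmul S c g) (fsmul S c0 g)) < e" .
      then have "fsmul S c g \<in> {g \<in> topspace (T M). \<exists>h \<in> V. proj S g = proj S h \<and> fnorm S (fsub S g h) < e}"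
        using cgM p(6) cg c0g by (intro CollectI conjI bexI[where x="fsmul S c0 g"]) auto
      then have "fsmul S c g \<in> W" using V(4) by blast
      then show "p \<in> ?P" using p by (auto simp: tsF[OF mb Kc])
    qed
    then show "\<exists>U V. openin (top_of_set K) U \<and> openin (from_models S T) V \<and> c0 \<in> U \<and> f0 \<in> V \<and> U \<times> V \<subseteq> ?P"
      using C A' c0C f0A by blast
  qed
qed


lemma add_cont_F: "continuous_map (subtopology (prod_topology (from_models S T) (from_models S T))
     (fibprod (carr S) (proj S))) (from_models S T) (\<lambda>(f, g). fadd S f g)"
  unfolding continuous_map
proof (intro conjI allI impI)
  let ?Z = "subtopology (prod_topology (from_models S T) (from_models S T)) (fibprod (carr S) (proj S))"
  have tsZ: "topspace ?Z = fibprod (carr S) (proj S)"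
    by (auto simp: tsF[OF mb Kc] fibprod_def)
  show "(\<lambda>(f, g). fadd S f g) ` topspace ?Z \<subseteq> topspace (from_models S T)"
    unfolding tsZ tsF[OF mb Kc] using add_in[OF bf3 Kc] by (auto simp: fibprod_def)
  fix W assume W: "openin (from_models S T) W"
  let ?R = "{p \<in> topspace ?Z. (\<lambda>(f, g). fadd S f g) p \<in> W}"
  show "openin ?Z ?R"
  proof (rule openin_subopen[THEN iffD2], rule ballI)
    fix p0 assume p0: "p0 \<in> ?R"
    then obtain f0 g0 where pp: "p0 = (f0, g0)" "f0 \<in> carr S" "g0 \<in> carr S" "proj S g0 = proj S f0"
      "fadd S f0 g0 \<in> W"
      unfolding tsZ by (cases p0) (auto simp: fibprod_def)
    obtain n1 where n1: "n1 \<ge> 1" "fnorm S f0 < real n1" using in_fball_large[OF pp(2)] by blast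
    obtain n2 where n2: "n2 \<ge> 1" "fnorm S g0 < real n2" using in_fball_large[OF pp(3)] by blast
    define n where "n = max n1 n2"
    have n: "n \<ge> 1" "fnorm S f0 < real n" "fnorm S g0 < real n" using n1 n2 by (auto simp: n_def)
    let ?Zn = "subtopology (prod_topology (T n) (T n)) (fibprod (carr S) (proj S))"
    have Wn: "openin (T (n + n)) (W \<inter> fball S (n + n))" using W n(1) unfolding openF[OF mb Kc] by simp
    have Rn: "openin ?Zn {p \<in> topspace ?Zn. (\<lambda>(f, g). fadd S f g) p \<in> W \<inter> fball S (n + n)}"
      by (rule openin_continuous_map_preimage[OF mbD_add[OF mb n(1) n(1)] Wn])
    then obtain Q where Q: "openin (prod_topology (T n) (T n)) Q"
      "{p \<in> topspace ?Zn. (\<lambda>(f, g). fadd S f g) p \<in> W \<inter> fball S (n + n)} = Q \<inter> fibprod (carr S) (proj S)"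
      unfolding openin_subtopology by blast
    have tsZn: "topspace ?Zn = (fball S n \<times> fball S n) \<inter> fibprod (carr S) (proj S)"
      using mbD_ts[OF mb n(1)] by auto
    have fbn: "f0 \<in> fball S n" "g0 \<in> fball S n" using pp n by (auto simp: fball_def)
    have "fnorm S (fadd S f0 g0) \<le> fnorm S f0 + fnorm S g0" using ntri[OF bf3 Kc pp(2,3,4)] .
    then have "fadd S f0 g0 \<in> fball S (n + n)" using add_in[OF bf3 Kc pp(2,3,4)] n by (auto simp: fball_def)
    then have "(f0, g0) \<in> {p \<in> topspace ?Zn. (\<lambda>(f, g). fadd S f g) p \<in> W \<inter> fball S (n + n)}"
      unfolding tsZn using fbn pp by (auto simp: fibprod_def)
    then have fgQ: "(f0, g0) \<in> Q" using Q(2) by blast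
    have "\<exists>U V. openin (T n) U \<and> openin (T n) V \<and> f0 \<in> U \<and> g0 \<in> V \<and> U \<times> V \<subseteq> Q"
      using openin_prod_topology_alt[THEN iffD1, OF Q(1), rule_format, OF fgQ] .
    then obtain O1 O2 where O: "openin (T n) O1" "openin (T n) O2" "f0 \<in> O1" "g0 \<in> O2" "O1 \<times> O2 \<subseteq> Q"
      by blast
    let ?Bo = "{f \<in> carr S. fnorm S f < real n}"
    have O1': "openin (from_models S T) (O1 \<inter> ?Bo)" by (rule local_open[OF mb Kc n(1) O(1)])
    have O2': "openin (from_models S T) (O2 \<inter> ?Bo)" by (rule local_open[OF mb Kc n(1) O(2)])
    let ?Qz = "((O1 \<inter> ?Bo) \<times> (O2 \<inter> ?Bo)) \<inter> fibprod (carr S) (proj S)"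
    have "openin (prod_topology (from_models S T) (from_models S T)) ((O1 \<inter> ?Bo) \<times> (O2 \<inter> ?Bo))"
      using O1' O2' by (simp add: openin_prod_Times_iff)
    then have Qz: "openin ?Z ?Qz" by (rule openin_subtopology_Int)
    have p0Q: "p0 \<in> ?Qz" using pp O n by (auto simp: fibprod_def)
    have O1n: "O1 \<subseteq> fball S n" and O2n: "O2 \<subseteq> fball S n"
      using openin_subset[OF O(1)] openin_subset[OF O(2)] mbD_ts[OF mb n(1)] by auto
    have "?Qz \<subseteq> ?R"
    proof
      fix p assume p: "p \<in> ?Qz"
      then have pQ: "p \<in> Q" using O(5) by blast
      have "p \<in> topspace ?Zn" unfolding tsZn using p O1n O2n by blast
      then have "p \<in> {p \<in> topspace ?Zn. (\<lambda>(f, g). fadd S f g) p \<in> W \<inter> fball S (n + n)}"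
        using Q(2) pQ p by blast
      then show "p \<in> ?R" unfolding tsZ using p by blast
    qed
    then show "\<exists>T. openin ?Z T \<and> p0 \<in> T \<and> T \<subseteq> ?R" using Qz p0Q by blast
  qed
qed

lemma zero_F:
  assumes x: "x \<in> topspace X"
  shows "(\<forall>U r. openin X U \<and> x \<in> U \<and> r > 0 \<longrightarrow>
           (\<exists>V. openin (from_models S T) V \<and> fzero S x \<in> V \<and>
                V \<subseteq> {f \<in> carr S. proj S f \<in> U \<and> fnorm S f < r})) \<and>
        (\<forall>W. openin (from_models S T) W \<and> fzero S x \<in> W \<longrightarrow>
           (\<exists>U r. openin X U \<and> x \<in> U \<and> r > 0 \<and>
                  {f \<in> carr S. proj S f \<in> U \<and> fnorm S f < r} \<subseteq> W))"
proof (intro conjI allI impI)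
  fix U and r :: real assume Ur: "openin X U \<and> x \<in> U \<and> r > 0"
  let ?V = "{f \<in> topspace (from_models S T). proj S f \<in> U} \<inter> {f \<in> carr S. fnorm S f < r}"
  have "openin (from_models S T) ?V"
    using openin_continuous_map_preimage[OF proj_cont_F] Ur openF_norm[OF mb Kc] by blast
  moreover have "fzero S x \<in> ?V"
    using zero_in[OF bf3 Kc x] nzero[OF bf3 Kc x] Ur by (auto simp: tsF[OF mb Kc])
  moreover have "?V \<subseteq> {f \<in> carr S. proj S f \<in> U \<and> fnorm S f < r}" by blast
  ultimately show "\<exists>V. openin (from_models S T) V \<and> fzero S x \<in> V \<and>
                V \<subseteq> {f \<in> carr S. proj S f \<in> U \<and> fnorm S f < r}" by blast
next
  fix W assume W: "openin (from_models S T) W \<and> fzero S x \<in> W"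
  have one: "(1::nat) \<ge> 1" by simp
  have W1: "openin (T 1) (W \<inter> fball S 1)" using W unfolding openF[OF mb Kc] by simp
  have zW1: "fzero S x \<in> W \<inter> fball S 1"
    using W zero_in[OF bf3 Kc x] nzero[OF bf3 Kc x] by (auto simp: fball_def)
  obtain V e where V: "openin (T 1) V" "fzero S x \<in> V" "e > 0"
    "{g \<in> topspace (T 1). \<exists>h \<in> V. proj S g = proj S h \<and> fnorm S (fsub S g h) < e} \<subseteq> W \<inter> fball S 1"
    using cmD_ve[OF mbD_cm[OF mb one] W1 zW1] by blast
  let ?U = "{y \<in> topspace X. fzero S y \<in> V}"
  have U: "openin X ?U" by (rule openin_continuous_map_preimage[OF mbD_z[OF mb] V(1)])
  have xU: "x \<in> ?U" using x V(2) by simp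
  define r where "r = min e 1"
  have r: "r > 0" "r \<le> e" "r \<le> 1" using V(3) by (auto simp: r_def)
  have "{f \<in> carr S. proj S f \<in> ?U \<and> fnorm S f < r} \<subseteq> W"
  proof
    fix g assume g: "g \<in> {f \<in> carr S. proj S f \<in> ?U \<and> fnorm S f < r}"
    then have gc: "g \<in> carr S" and gU: "proj S g \<in> ?U" and gn: "fnorm S g < r" by auto
    have g1: "g \<in> topspace (T 1)" using gc gn r mbD_ts[OF mb one] by (auto simp: fball_def)
    have px: "proj S g \<in> topspace X" using projc[OF bf3 Kc gc] .
    have "fnorm S (fsub S g (fzero S (proj S g))) < e" using sub_zero[OF bf3 Kc gc] gn r by simp
    then have "g \<in> {g \<in> topspace (T 1). \<exists>h \<in> V. proj S g = proj S h \<and> fnorm S (fsub S g h) < e}"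
      using g1 gU zero_in[OF bf3 Kc px]
      by (intro CollectI conjI bexI[where x="fzero S (proj S g)"]) auto
    then show "g \<in> W" using V(4) by blast
  qed
  then show "\<exists>U r. openin X U \<and> x \<in> U \<and> r > 0 \<and>
                  {f \<in> carr S. proj S f \<in> U \<and> fnorm S f < r} \<subseteq> W"
    using U xU r(1) by blast
qed

lemma part2: "banach_bundle K X S (from_models S T)"
  unfolding banach_bundle_def
proof (intro conjI)
  show "topspace (from_models S T) = carr S" by (rule tsF[OF mb Kc])
  show "banach_fibres K X S" by (rule bf3)
  show "continuous_map (from_models S T) X (proj S)" by (rule proj_cont_F)
  show "open_map (from_models S T) X (proj S)" by (rule proj_open_F)
  show "continuous_map (prod_topology (top_of_set K) (from_models S T)) (from_models S T)
      (\<lambda>(c, f). fsmul S c f)" by (rule smul_cont_F)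
  show "continuous_map (subtopology (prod_topology (from_models S T) (from_models S T))
     (fibprod (carr S) (proj S))) (from_models S T) (\<lambda>(f, g). fadd S f g)" by (rule add_cont_F)
  show "\<forall>r. openin (from_models S T) {f \<in> carr S. fnorm S f < r}" using openF_norm[OF mb Kc] by blast
  show "\<forall>x\<in>topspace X.
       (\<forall>U r. openin X U \<and> x \<in> U \<and> r > 0 \<longrightarrow>
           (\<exists>V. openin (from_models S T) V \<and> fzero S x \<in> V \<and>
                V \<subseteq> {f \<in> carr S. proj S f \<in> U \<and> fnorm S f < r})) \<and>
        (\<forall>W. openin (from_models S T) W \<and> fzero S x \<in> W \<longrightarrow>
           (\<exists>U r. openin X U \<and> x \<in> U \<and> r > 0 \<and>
                  {f \<in> carr S. proj S f \<in> U \<and> fnorm S f < r} \<subseteq> W))"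
    using zero_F by blast
qed

lemma part4: "n \<ge> 1 \<Longrightarrow> to_models S (from_models S T) n = T n"
  unfolding to_models_def by (rule embed[OF mb Kc])

end


lemma flc_img:
  assumes L: "fibrewise_linear_contraction K S S' \<phi>" and f: "f \<in> fball S n"
  shows "\<phi> f \<in> fball S' n"
proof -
  have fc: "f \<in> carr S" and fn: "fnorm S f \<le> n" using f by (auto simp: fball_def)
  have "\<phi> f \<in> carr S'" and "fnorm S' (\<phi> f) \<le> fnorm S f"
    using L fc unfolding fibrewise_linear_contraction_def by blast+
  then show ?thesis using fn by (auto simp: fball_def)
qed

lemma flc_carr:
  assumes L: "fibrewise_linear_contraction K S S' \<phi>" and f: "f \<in> carr S"
  shows "\<phi> f \<in> carr S'"
  using L f unfolding fibrewise_linear_contraction_def by blast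

lemma part5:
  assumes bb: "banach_bundle K X S TE" and bb': "banach_bundle K X S' TE'"
  shows "bundle_morphism K S TE S' TE' \<phi> \<longleftrightarrow>
          model_morphism K S (to_models S TE) S' (to_models S' TE') \<phi>"
  unfolding bundle_morphism_def model_morphism_def
proof (intro iffI conjI allI impI; (elim conjE)?)
  assume c: "continuous_map TE TE' \<phi>" and L: "fibrewise_linear_contraction K S S' \<phi>"
  show "fibrewise_linear_contraction K S S' \<phi>" by (rule L)
  fix n :: nat assume n: "1 \<le> n"
  have img: "\<phi> \<in> topspace (subtopology TE (fball S n)) \<rightarrow> fball S' n"
    using flc_img[OF L] by auto
  show "continuous_map (to_models S TE n) (to_models S' TE' n) \<phi>"
    unfolding to_models_def continuous_map_in_subtopology
    using continuous_map_from_subtopology[OF c] img by blast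
next
  assume L: "fibrewise_linear_contraction K S S' \<phi>"
    and c: "\<forall>n\<ge>1. continuous_map (to_models S TE n) (to_models S' TE' n) \<phi>"
  show "fibrewise_linear_contraction K S S' \<phi>" by (rule L)
  show "continuous_map TE TE' \<phi>"
    unfolding continuous_map
  proof (intro conjI allI impI)
    show "\<phi> ` topspace TE \<subseteq> topspace TE'"
      using flc_carr[OF L] bbD_ts[OF bb] bbD_ts[OF bb'] by auto
    fix U' assume U': "openin TE' U'"
    show "openin TE {x \<in> topspace TE. \<phi> x \<in> U'}"
      unfolding BB_final[OF bb]
    proof (intro conjI allI impI)
      show "{x \<in> topspace TE. \<phi> x \<in> U'} \<subseteq> carr S" using bbD_ts[OF bb] by auto
      fix n :: nat assume n: "1 \<le> n"
      have cn: "continuous_map (subtopology TE (fball S n)) (subtopology TE' (fball S' n)) \<phi>"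
        using c n by (simp add: to_models_def)
      have "openin (subtopology TE' (fball S' n)) (U' \<inter> fball S' n)"
        by (rule openin_subtopology_Int[OF U'])
      then have "openin (subtopology TE (fball S n))
          {x \<in> topspace (subtopology TE (fball S n)). \<phi> x \<in> U' \<inter> fball S' n}"
        by (rule openin_continuous_map_preimage[OF cn])
      moreover have "{x \<in> topspace (subtopology TE (fball S n)). \<phi> x \<in> U' \<inter> fball S' n} =
          {x \<in> topspace TE. \<phi> x \<in> U'} \<inter> fball S n"
        using flc_img[OF L] by auto
      ultimately show "openin (subtopology TE (fball S n)) ({x \<in> topspace TE. \<phi> x \<in> U'} \<inter> fball S n)"
        by simp
    qed
  qed
qed

theorem mainTheorem14:
  fixes X :: "'x topology" and K :: "complex set"
  assumes "compact_space X" and "Hausdorff_space X"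
    and "K = range complex_of_real \<or> K = UNIV"
  shows
    "(\<forall>(S :: ('x, 'e) fibred) TE. banach_bundle K X S TE \<longrightarrow>
         model_bundle K X S (to_models S TE)) \<and>
     (\<forall>(S :: ('x, 'e) fibred) T. model_bundle K X S T \<longrightarrow>
         banach_bundle K X S (from_models S T)) \<and>
     (\<forall>(S :: ('x, 'e) fibred) TE. banach_bundle K X S TE \<longrightarrow>
         from_models S (to_models S TE) = TE) \<and>
     (\<forall>(S :: ('x, 'e) fibred) T. model_bundle K X S T \<longrightarrow>
         (\<forall>n \<ge> 1. to_models S (from_models S T) n = T n)) \<and>
     (\<forall>(S :: ('x, 'e) fibred) TE (S' :: ('x, 'e2) fibred) TE' \<phi>.
         banach_bundle K X S TE \<and> banach_bundle K X S' TE' \<longrightarrow>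
         (bundle_morphism K S TE S' TE' \<phi> \<longleftrightarrow>
          model_morphism K S (to_models S TE) S' (to_models S' TE') \<phi>))"
proof (intro conjI allI impI)
  note Kc = assms(3)
  fix S :: "('x, 'e) fibred" and TE assume "banach_bundle K X S TE"
  then show "model_bundle K X S (to_models S TE)" using part1 Kc by blast
next
  fix S :: "('x, 'e) fibred" and T assume "model_bundle K X S T"
  then show "banach_bundle K X S (from_models S T)" using part2 assms(3) by blast
next
  fix S :: "('x, 'e) fibred" and TE assume "banach_bundle K X S TE"
  then show "from_models S (to_models S TE) = TE" by (rule part3)
next
  fix S :: "('x, 'e) fibred" and T and n :: nat assume "model_bundle K X S T" "1 \<le> n"
  then show "to_models S (from_models S T) n = T n" using part4 assms(3) by blast
next
  fix S :: "('x, 'e) fibred" and TE and S' :: "('x, 'e2) fibred" and TE' \<phi>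
  assume "banach_bundle K X S TE \<and> banach_bundle K X S' TE'"
  then show "bundle_morphism K S TE S' TE' \<phi> \<longleftrightarrow>
          model_morphism K S (to_models S TE) S' (to_models S' TE') \<phi>"
    using part5 by blast
qed


end
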